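(* Let $p$ be a prime and $\Gamma$ a profinite group acting trivially on $\mathbb{F}_p$. If every open subgroup of $\Gamma$ admits the cup product exact sequence property, then every closed subgroup of $\Gamma$ admits the cup product exact sequence property.
   Context: All cohomology is continuous with coefficients in the trivial module $\mathbb{F}_p$. A profinite group $H$ admits the cup product exact sequence property if for every $\chi\in H^1(H,\mathbb{F}_p)=\operatorname{Hom}(H,\mathbb{F}_p)$ the sequence $H^1(\ker\chi,\mathbb{F}_p)\xrightarrow{\operatorname{Cor}}H^1(H,\mathbb{F}_p)\xrightarrow{\chi\cup}H^2(H,\mathbb{F}_p)\xrightarrow{\operatorname{Res}}H^2(\ker\chi,\mathbb{F}_p)$ is exact at $H^1(H,\mathbb{F}_p)$ and at $H^2(H,\mathbb{F}_p)$. *)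

theory Defs
  imports "HOL-Analysis.Analysis" "HOL-Algebra.Coset" "Berlekamp_Zassenhaus.Finite_Field"
begin

text \<open>Coefficients: the prime field F_p is the type 'p mod_ring with 'p of class prime_card
  (i.e. CARD('p) = p is prime); it carries the discrete topology.\<close>

definition topological_group :: "('a,'b) monoid_scheme \<Rightarrow> 'a topology \<Rightarrow> bool" where
  "topological_group G T \<longleftrightarrow> group G \<and> topspace T = carrier G \<and>
     continuous_map (prod_topology T T) T (\<lambda>(x,y). x \<otimes>\<^bsub>G\<^esub> y) \<and>
     continuous_map T T (\<lambda>x. inv\<^bsub>G\<^esub> x)"

definition totally_disconnected_space :: "'a topology \<Rightarrow> bool" where
  "totally_disconnected_space T \<longleftrightarrow> (\<forall>S. connectedin T S \<longrightarrow> (\<exists>x. S \<subseteq> {x}))"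

definition profinite_group :: "('a,'b) monoid_scheme \<Rightarrow> 'a topology \<Rightarrow> bool" where
  "profinite_group G T \<longleftrightarrow> topological_group G T \<and> compact_space T \<and> Hausdorff_space T \<and>
     totally_disconnected_space T"

abbreviation subgrp :: "('a,'b) monoid_scheme \<Rightarrow> 'a set \<Rightarrow> ('a,'b) monoid_scheme" where
  "subgrp G H \<equiv> G\<lparr>carrier := H\<rparr>"

definition cochain1 :: "('a,'b) monoid_scheme \<Rightarrow> 'a topology \<Rightarrow> ('a \<Rightarrow> 'p::prime_card mod_ring) \<Rightarrow> bool" where
  "cochain1 G T f \<longleftrightarrow> continuous_map T (discrete_topology UNIV) f"

definition cochain2 :: "('a,'b) monoid_scheme \<Rightarrow> 'a topology \<Rightarrow> ('a \<times> 'a \<Rightarrow> 'p::prime_card mod_ring) \<Rightarrow> bool" where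
  "cochain2 G T f \<longleftrightarrow> continuous_map (prod_topology T T) (discrete_topology UNIV) f"

text \<open>H^1(G,F_p) = Hom_cont(G,F_p) (trivial action; 1-coboundaries vanish).\<close>
definition H1 :: "('a,'b) monoid_scheme \<Rightarrow> 'a topology \<Rightarrow> ('a \<Rightarrow> 'p::prime_card mod_ring) set" where
  "H1 G T = {f. cochain1 G T f \<and>
      (\<forall>x\<in>carrier G. \<forall>y\<in>carrier G. f (x \<otimes>\<^bsub>G\<^esub> y) = f x + f y)}"

definition Z2 :: "('a,'b) monoid_scheme \<Rightarrow> 'a topology \<Rightarrow> ('a \<times> 'a \<Rightarrow> 'p::prime_card mod_ring) set" where
  "Z2 G T = {f. cochain2 G T f \<and>
      (\<forall>g\<in>carrier G. \<forall>h\<in>carrier G. \<forall>k\<in>carrier G.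
         f (h, k) - f (g \<otimes>\<^bsub>G\<^esub> h, k) + f (g, h \<otimes>\<^bsub>G\<^esub> k) - f (g, h) = 0)}"

definition B2 :: "('a,'b) monoid_scheme \<Rightarrow> 'a topology \<Rightarrow> ('a \<times> 'a \<Rightarrow> 'p::prime_card mod_ring) set" where
  "B2 G T = {f. \<exists>\<phi>. cochain1 G T \<phi> \<and>
      (\<forall>g\<in>carrier G. \<forall>h\<in>carrier G. f (g, h) = \<phi> h - \<phi> (g \<otimes>\<^bsub>G\<^esub> h) + \<phi> g)}"

text \<open>H^2(G,F_p) = Z2/B2: two cocycles represent the same class iff their difference lies in B2.
  A class is zero iff a representative lies in B2.\<close>
definition cohomologous2 :: "('a,'b) monoid_scheme \<Rightarrow> 'a topology \<Rightarrow>
    ('a \<times> 'a \<Rightarrow> 'p::prime_card mod_ring) \<Rightarrow> ('a \<times> 'a \<Rightarrow> 'p mod_ring) \<Rightarrow> bool" where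
  "cohomologous2 G T f f' \<longleftrightarrow> (\<lambda>x. f x - f' x) \<in> B2 G T"

definition cup11 :: "('a \<Rightarrow> 'p::prime_card mod_ring) \<Rightarrow> ('a \<Rightarrow> 'p mod_ring) \<Rightarrow> ('a \<times> 'a \<Rightarrow> 'p mod_ring)" where
  "cup11 \<kappa> \<psi> = (\<lambda>(g, h). \<kappa> g * \<psi> h)"

definition kerF :: "('a,'b) monoid_scheme \<Rightarrow> ('a \<Rightarrow> 'p::prime_card mod_ring) \<Rightarrow> 'a set" where
  "kerF G \<kappa> = {g \<in> carrier G. \<kappa> g = 0}"

text \<open>Corestriction H^1(N) \<rightarrow> H^1(G) for a subgroup N of finite index: composition with the
  transfer, computed with a (chosen) right transversal R of N in G.\<close>
definition right_transversal :: "('a,'b) monoid_scheme \<Rightarrow> 'a set \<Rightarrow> 'a set" where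
  "right_transversal G N = (SOME R. R \<subseteq> carrier G \<and>
      (\<forall>x\<in>carrier G. \<exists>!r. r \<in> R \<and> x \<in> N #>\<^bsub>G\<^esub> r))"

definition coset_rep :: "('a,'b) monoid_scheme \<Rightarrow> 'a set \<Rightarrow> 'a \<Rightarrow> 'a" where
  "coset_rep G N x = (THE r. r \<in> right_transversal G N \<and> x \<in> N #>\<^bsub>G\<^esub> r)"

definition cor1 :: "('a,'b) monoid_scheme \<Rightarrow> 'a set \<Rightarrow> ('a \<Rightarrow> 'p::prime_card mod_ring) \<Rightarrow> ('a \<Rightarrow> 'p mod_ring)" where
  "cor1 G N \<phi> = (\<lambda>g. \<Sum>r\<in>right_transversal G N.
      \<phi> (r \<otimes>\<^bsub>G\<^esub> g \<otimes>\<^bsub>G\<^esub> inv\<^bsub>G\<^esub> (coset_rep G N (r \<otimes>\<^bsub>G\<^esub> g))))"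

text \<open>The cup product exact sequence property for (G,T) with coefficients F_p = 'p mod_ring:
  for every \<kappa> \<in> H^1(G), the sequence
  H^1(ker \<kappa>) --Cor--> H^1(G) --\<kappa>\<union>--> H^2(G) --Res--> H^2(ker \<kappa>)
  is exact at H^1(G) and at H^2(G).\<close>
definition cup_exact :: "('a,'b) monoid_scheme \<Rightarrow> 'a topology \<Rightarrow> 'p::prime_card itself \<Rightarrow> bool" where
  "cup_exact G T (_ :: 'p itself) \<longleftrightarrow>
    (\<forall>\<kappa> \<in> (H1 G T :: ('a \<Rightarrow> 'p mod_ring) set).
      let N = kerF G \<kappa>; GN = subgrp G N; TN = subtopology T N in
      \<comment> \<open>exactness at H^1(G): im Cor \<subseteq> ker (\<kappa>\<union>) and ker (\<kappa>\<union>) \<subseteq> im Cor\<close>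
      (\<forall>\<phi> \<in> H1 GN TN. cup11 \<kappa> (cor1 G N \<phi>) \<in> B2 G T) \<and>
      (\<forall>\<psi> \<in> H1 G T. cup11 \<kappa> \<psi> \<in> B2 G T \<longrightarrow>
          (\<exists>\<phi> \<in> H1 GN TN. \<forall>g\<in>carrier G. \<psi> g = cor1 G N \<phi> g)) \<and>
      \<comment> \<open>exactness at H^2(G): im (\<kappa>\<union>) \<subseteq> ker Res and ker Res \<subseteq> im (\<kappa>\<union>)\<close>
      (\<forall>\<psi> \<in> H1 G T. cup11 \<kappa> \<psi> \<in> B2 GN TN) \<and>
      (\<forall>f \<in> Z2 G T. f \<in> B2 GN TN \<longrightarrow>
          (\<exists>\<psi> \<in> H1 G T. cohomologous2 G T f (cup11 \<kappa> \<psi>))))"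

end

theory Submission
  imports Defs
begin

definition idx :: "'p::prime_card mod_ring \<Rightarrow> nat" where
  "idx c = nat (to_int_mod_ring c)"

lemma idx_lt: "idx (c::'p::prime_card mod_ring) < CARD('p)"
proof -
  have "to_int_mod_ring c \<in> range (to_int_mod_ring :: 'p mod_ring \<Rightarrow> int)" by simp
  then have "to_int_mod_ring c \<in> {0..<int CARD('p)}" using range_to_int_mod_ring by metis
  then show ?thesis unfolding idx_def by auto
qed

lemma of_nat_idx [simp]: "of_nat (idx (c::'p::prime_card mod_ring)) = c"
proof -
  have "to_int_mod_ring c \<in> range (to_int_mod_ring :: 'p mod_ring \<Rightarrow> int)" by simp
  then have "to_int_mod_ring c \<ge> 0" using range_to_int_mod_ring by force
  then show ?thesis unfolding idx_def of_nat_of_int_mod_ring by simp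
qed

lemma idx_of_nat: "i < CARD('p) \<Longrightarrow> idx (of_nat i :: 'p::prime_card mod_ring) = i"
  unfolding idx_def of_nat_of_int_mod_ring by simp

lemma bij_idx: "bij_betw (idx :: 'p::prime_card mod_ring \<Rightarrow> nat) UNIV {..<CARD('p)}"
  by (rule bij_betw_byWitness[where f' = of_nat]) (auto simp: idx_lt idx_of_nat)

definition homF :: "('a,'b) monoid_scheme \<Rightarrow> 'a set \<Rightarrow> ('a \<Rightarrow> 'p::prime_card mod_ring) \<Rightarrow> bool" where
  "homF G A f \<longleftrightarrow> (\<forall>x\<in>A. \<forall>y\<in>A. f (x \<otimes>\<^bsub>G\<^esub> y) = f x + f y)"

lemma homF_D: "homF G A f \<Longrightarrow> x \<in> A \<Longrightarrow> y \<in> A \<Longrightarrow> f (x \<otimes>\<^bsub>G\<^esub> y) = f x + f y"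
  unfolding homF_def by simp

context group
begin

lemma homF_one:
  assumes "subgroup S G" "homF G S f"
  shows "f \<one> = 0"
proof -
  have "\<one> \<in> S" using assms(1) by (rule subgroup.one_closed)
  then have "f (\<one> \<otimes> \<one>) = f \<one> + f \<one>" using assms(2) unfolding homF_def by blast
  then have "f \<one> = f \<one> + f \<one>" by simp
  then show ?thesis by (rule add_cancel_right_right[THEN iffD1])
qed

lemma homF_inv:
  assumes "subgroup S G" "homF G S f" "x \<in> S"
  shows "f (inv x) = - f x"
proof -
  have ix: "inv x \<in> S" using assms(1,3) by (rule subgroup.m_inv_closed)
  have xc: "x \<in> carrier G" using assms(1,3) by (rule subgroup.mem_carrier)
  have e: "f (x \<otimes> inv x) = f x + f (inv x)" using assms(2,3) ix by (rule homF_D)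
  have "x \<otimes> inv x = \<one>" using xc by (rule r_inv)
  with e have "f \<one> = f x + f (inv x)" by simp
  then have "f x + f (inv x) = 0" using homF_one[OF assms(1,2)] by simp
  then have "- f x = f (inv x)" by (rule add.inverse_unique)
  then show ?thesis by simp
qed

lemma sub_pow:
  assumes "subgroup S G" "x \<in> S"
  shows "x [^] (n::nat) \<in> S"
proof (induction n)
  case 0
  then show ?case using assms(1) by (simp add: subgroup.one_closed)
next
  case (Suc n)
  have "x [^] Suc n = x [^] n \<otimes> x" by (rule nat_pow_Suc)
  then show ?case using Suc assms by (simp add: subgroup.m_closed)
qed

lemma homF_pow:
  assumes "subgroup S G" "homF G S f" "x \<in> S"
  shows "f (x [^] (n::nat)) = of_nat n * f x"
proof (induction n)
  case 0 then show ?case using homF_one[OF assms(1,2)] by simp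
next
  case (Suc n)
  have "x [^] n \<in> S" using assms(1,3) by (rule sub_pow)
  then have "f (x [^] n \<otimes> x) = f (x [^] n) + f x" using assms(2,3) by (intro homF_D)
  also have "\<dots> = (of_nat n + 1) * f x" using Suc by (simp add: distrib_right)
  finally show ?case by simp
qed

lemma homF_3:
  assumes "subgroup S G" "homF G S f" "a \<in> S" "b \<in> S" "c \<in> S"
  shows "f (a \<otimes> b \<otimes> inv c) = f a + f b - f c"
proof -
  have ic: "inv c \<in> S" using assms(1,5) by (rule subgroup.m_inv_closed)
  have ab: "a \<otimes> b \<in> S" using assms(1,3,4) by (rule subgroup.m_closed)
  have "f (a \<otimes> b \<otimes> inv c) = f (a \<otimes> b) + f (inv c)" using assms(2) ab ic by (rule homF_D)
  also have "\<dots> = f a + f b + f (inv c)" using homF_D[OF assms(2,3,4)] by simp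
  also have "\<dots> = f a + f b - f c" using homF_inv[OF assms(1,2,5)] by simp
  finally show ?thesis .
qed

end

definition kerS :: "'a set \<Rightarrow> ('a \<Rightarrow> 'p::prime_card mod_ring) \<Rightarrow> 'a set" where
  "kerS S f = {g \<in> S. f g = 0}"

context group
begin

lemma kerS_subgroup:
  assumes "subgroup S G" "homF G S f"
  shows "subgroup (kerS S f) G"
proof (rule subgroupI)
  show "kerS S f \<subseteq> carrier G" unfolding kerS_def using assms(1) subgroup.mem_carrier by fastforce
  show "kerS S f \<noteq> {}" unfolding kerS_def using assms subgroup.one_closed homF_one by fastforce
  fix a b assume a: "a \<in> kerS S f" and b: "b \<in> kerS S f"
  have aS: "a \<in> S" "f a = 0" using a unfolding kerS_def by auto
  have bS: "b \<in> S" "f b = 0" using b unfolding kerS_def by auto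
  show "inv a \<in> kerS S f" unfolding kerS_def using homF_inv[OF assms aS(1)] aS subgroup.m_inv_closed[OF assms(1) aS(1)] by simp
  show "a \<otimes> b \<in> kerS S f" unfolding kerS_def using homF_D[OF assms(2) aS(1) bS(1)] aS bS subgroup.m_closed[OF assms(1) aS(1) bS(1)] by simp
qed

lemma homF_sub:
  assumes "homF G S f" "A \<subseteq> S" shows "homF G A f"
  unfolding homF_def
proof (intro ballI)
  fix x y assume "x \<in> A" "y \<in> A"
  then show "f (x \<otimes> y) = f x + f y" using assms(2) by (intro homF_D[OF assms(1)]) auto
qed

lemma coset_iff:
  assumes "subgroup S G" "homF G S f" "r \<in> S"
  shows "x \<in> kerS S f #> r \<longleftrightarrow> x \<in> S \<and> f x = f r"
proof
  assume "x \<in> kerS S f #> r"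
  then obtain n where n: "n \<in> S" "f n = 0" "x = n \<otimes> r" unfolding r_coset_def kerS_def by auto
  have "f x = f n + f r" using n(3) homF_D[OF assms(2) n(1) assms(3)] by simp
  then show "x \<in> S \<and> f x = f r" using n subgroup.m_closed[OF assms(1) n(1) assms(3)] by simp
next
  assume x: "x \<in> S \<and> f x = f r"
  obtain n where n: "n = x \<otimes> inv r" by blast
  have rc: "r \<in> carrier G" "x \<in> carrier G"
    using subgroup.mem_carrier[OF assms(1) assms(3)] subgroup.mem_carrier[OF assms(1)] x by auto
  have nS: "n \<in> S" using assms x n by (simp add: subgroup.m_closed subgroup.m_inv_closed)
  have "f n = f x + f (inv r)" using homF_D[OF assms(2), of x "inv r"] x subgroup.m_inv_closed[OF assms(1,3)] n by simp
  then have nf: "f n = 0" using homF_inv[OF assms] x by simp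
  have eq: "x = n \<otimes> r" using rc n by (simp add: m_assoc)
  have "n \<in> kerS S f" unfolding kerS_def using nS nf by simp
  then show "x \<in> kerS S f #> r" unfolding r_coset_def
    by (rule UN_I) (simp add: eq)
qed

end

lemma r_coset_upd: "N #>\<^bsub>G\<lparr>carrier := S\<rparr>\<^esub> r = N #>\<^bsub>G\<^esub> r"
  by (simp add: r_coset_def)

context group
begin

lemma cor_trivial:
  assumes S: "subgroup S G" and hphi: "homF G S \<phi>" and g: "g \<in> S"
  shows "cor1 (G\<lparr>carrier := S\<rparr>) S \<phi> g = \<phi> g"
proof -
  let ?K = "G\<lparr>carrier := S\<rparr>"
  define P where "P R \<longleftrightarrow> R \<subseteq> S \<and> (\<forall>x\<in>S. \<exists>!r. r \<in> R \<and> x \<in> S #> r)" for R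
  have Sc: "S \<subseteq> carrier G" using S by (rule subgroup.subset)
  have cos: "S #> r = S" if "r \<in> S" for r
    using subgroup.rcos_const[OF S is_group that] .

  have "P {\<one>}" unfolding P_def
    using cos[of \<one>] subgroup.one_closed[OF S] by auto
  have RT: "right_transversal ?K S = (SOME R. P R)"
    unfolding right_transversal_def P_def r_coset_upd by simp
  have PR: "P (right_transversal ?K S)" unfolding RT by (rule someI) fact
  define R where "R = right_transversal ?K S"
  have RS: "R \<subseteq> S" using PR unfolding P_def R_def by (rule conjunct1)
  have "\<forall>x\<in>S. \<exists>!r. r \<in> R \<and> x \<in> S #> r" using PR unfolding P_def R_def by (rule conjunct2)
  then have "\<exists>!r. r \<in> R \<and> \<one> \<in> S #> r" using subgroup.one_closed[OF S] by (rule bspec)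
  then obtain r0 where r0: "r0 \<in> R \<and> \<one> \<in> S #> r0" and un: "\<And>r. r \<in> R \<and> \<one> \<in> S #> r \<Longrightarrow> r = r0"
    by metis
  have R0: "R = {r0}"
  proof
    show "R \<subseteq> {r0}"
    proof
      fix r assume r: "r \<in> R"
      then have "r \<in> S" using RS by blast
      then have "\<one> \<in> S #> r" using cos subgroup.one_closed[OF S] by simp
      then show "r \<in> {r0}" using un[of r] r by simp
    qed
    show "{r0} \<subseteq> R" using r0 by simp
  qed
  have r0S: "r0 \<in> S" using r0 RS by auto
  have rep: "coset_rep ?K S x = r0" if "x \<in> S" for x
  proof -
    have xr: "x \<in> S #> r0" using cos[OF r0S] that by simp
    have r0R: "r0 \<in> R" using R0 by simp
    have "(THE r. r \<in> R \<and> x \<in> S #> r) = r0"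
    proof (rule the_equality)
      show "r0 \<in> R \<and> x \<in> S #> r0" using xr r0R by (rule conjI[rotated])
      show "\<And>r. r \<in> R \<and> x \<in> S #> r \<Longrightarrow> r = r0" using R0 by simp
    qed
    then show ?thesis unfolding coset_rep_def R_def r_coset_upd .
  qed
  have "r0 \<otimes> g \<in> S" using S r0S g by (rule subgroup.m_closed)
  then have "cor1 ?K S \<phi> g = \<phi> (r0 \<otimes> g \<otimes> inv r0)"
    unfolding cor1_def R_def[symmetric] R0 using rep m_inv_consistent[OF S r0S] by simp
  also have "\<dots> = \<phi> r0 + \<phi> g - \<phi> r0" using S hphi r0S g r0S by (rule homF_3)
  finally show ?thesis by simp
qed

lemma cor_formula:
  fixes f :: "'a \<Rightarrow> 'p::prime_card mod_ring"
  assumes S: "subgroup S G" and hf: "homF G S f" and tS: "t \<in> S" and ft: "f t = 1"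
    and hphi: "homF G (kerS S f) \<phi>" and g: "g \<in> S"
  shows "cor1 (G\<lparr>carrier := S\<rparr>) (kerS S f) \<phi> g =
     (\<Sum>i<CARD('p). \<phi> (t [^] i \<otimes> g \<otimes> inv (t [^] idx (of_nat i + f g))))"
proof -
  let ?K = "G\<lparr>carrier := S\<rparr>"
  let ?N = "kerS S f"
  let ?p = "CARD('p)"
  have NS: "subgroup ?N G" using S hf by (rule kerS_subgroup)
  define P where "P R \<longleftrightarrow> R \<subseteq> S \<and> (\<forall>x\<in>S. \<exists>!r. r \<in> R \<and> x \<in> ?N #> r)" for R
  have tp: "t [^] (n::nat) \<in> S" for n using S tS by (rule sub_pow)
  have ftp: "f (t [^] (n::nat)) = of_nat n" for n using homF_pow[OF S hf tS, of n] ft by simp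
  have cosi: "x \<in> ?N #> r \<longleftrightarrow> x \<in> S \<and> f x = f r" if "r \<in> S" for x r
    using S hf that by (rule coset_iff)
  define T0 where "T0 = (\<lambda>i. t [^] i) ` {..<?p}"
  have "P T0" unfolding P_def
  proof (intro conjI ballI)
    show "T0 \<subseteq> S" unfolding T0_def using tp by auto
    fix x assume x: "x \<in> S"
    show "\<exists>!r. r \<in> T0 \<and> x \<in> ?N #> r"
    proof (rule ex1I)
      show "t [^] idx (f x) \<in> T0 \<and> x \<in> ?N #> t [^] idx (f x)"
        unfolding T0_def using idx_lt[of "f x"] cosi[OF tp] x ftp by auto
      fix r assume r: "r \<in> T0 \<and> x \<in> ?N #> r"
      then obtain j where j: "j < ?p" "r = t [^] j" unfolding T0_def by auto
      then have "f x = of_nat j" using r cosi[OF tp, of x j] ftp by simp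
      then have "j = idx (f x)" using idx_of_nat[OF j(1)] by simp
      then show "r = t [^] idx (f x)" using j(2) by simp
    qed
  qed
  have RT: "right_transversal ?K ?N = (SOME R. P R)"
    unfolding right_transversal_def P_def r_coset_upd by simp
  define R where "R = right_transversal ?K ?N"
  have PR: "P R" unfolding R_def RT by (rule someI) fact
  have RS: "R \<subseteq> S" using PR unfolding P_def by (rule conjunct1)
  have ex1: "\<exists>!r. r \<in> R \<and> x \<in> ?N #> r" if "x \<in> S" for x
    using PR that unfolding P_def by simp
  define rep where "rep x = coset_rep ?K ?N x" for x
  have rep_eq: "rep x = (THE r. r \<in> R \<and> x \<in> ?N #> r)" for x
    unfolding rep_def coset_rep_def R_def r_coset_upd ..
  have repR: "rep x \<in> R \<and> x \<in> ?N #> rep x" if "x \<in> S" for x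
    unfolding rep_eq using ex1[OF that] by (rule theI')
  have rep_f: "rep x \<in> R \<and> f (rep x) = f x" if "x \<in> S" for x
    using repR[OF that] cosi[of "rep x" x] RS that by auto
  have uniq: "r1 = r2" if "r1 \<in> R" "r2 \<in> R" "f r1 = f r2" for r1 r2
  proof -
    have r1S: "r1 \<in> S" and r2S: "r2 \<in> S" using that RS by auto
    have a: "r1 \<in> ?N #> r1" using cosi[OF r1S] r1S by simp
    have b: "r1 \<in> ?N #> r2" using cosi[OF r2S] r1S that(3) by simp
    show ?thesis using ex1[OF r1S] a b that(1,2) by (metis)
  qed
  define s where "s c = rep (t [^] idx c)" for c :: "'p mod_ring"
  have sR: "s c \<in> R" and fs: "f (s c) = c" for c :: "'p mod_ring"
    using rep_f[OF tp, of "idx c"] ftp unfolding s_def by auto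
  have sS: "s c \<in> S" for c using sR RS by auto
  have bs: "bij_betw s UNIV R"
  proof (rule bij_betw_byWitness[where f' = f])
    show "\<forall>a\<in>UNIV. f (s a) = a" using fs by simp
    show "\<forall>a'\<in>R. s (f a') = a'" using uniq sR fs by simp
    show "s ` UNIV \<subseteq> R" using sR by auto
    show "f ` R \<subseteq> UNIV" by simp
  qed
  define n where "n c = s c \<otimes> inv (t [^] idx c)" for c :: "'p mod_ring"
  have nN: "n c \<in> ?N" for c
  proof -
    have "n c \<in> S" unfolding n_def using S sS tp by (simp add: subgroup.m_closed subgroup.m_inv_closed)
    moreover have "f (n c) = 0"
    proof -
      have "f (n c) = f (s c) + f (inv (t [^] idx c))" unfolding n_def
        using homF_D[OF hf sS subgroup.m_inv_closed[OF S tp]] .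
      then show ?thesis using homF_inv[OF S hf tp] fs ftp by simp
    qed
    ultimately show ?thesis unfolding kerS_def by simp
  qed
  have sn: "s c = n c \<otimes> t [^] idx c" for c
  proof -
    have "s c \<in> carrier G" "t [^] idx c \<in> carrier G" using subgroup.mem_carrier[OF S sS] subgroup.mem_carrier[OF S tp] by auto
    then show ?thesis unfolding n_def by (simp add: m_assoc)
  qed
  have rep_sg: "rep (s c \<otimes> g) = s (c + f g)" for c
  proof -
    have sg: "s c \<otimes> g \<in> S" using S sS g by (rule subgroup.m_closed)
    have "f (s c \<otimes> g) = c + f g" using homF_D[OF hf sS g] fs by simp
    then show ?thesis using uniq[of "rep (s c \<otimes> g)" "s (c + f g)"] rep_f[OF sg] sR fs by simp
  qed
  define M where "M c = t [^] idx c \<otimes> g \<otimes> inv (t [^] idx (c + f g))" for c :: "'p mod_ring"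
  have MN: "M c \<in> ?N" for c
  proof -
    have "M c \<in> S" unfolding M_def using S tp g by (simp add: subgroup.m_closed subgroup.m_inv_closed)
    moreover have "f (M c) = 0" unfolding M_def using homF_3[OF S hf tp g tp] ftp by simp
    ultimately show ?thesis unfolding kerS_def by simp
  qed
  have trm: "\<phi> (s c \<otimes> g \<otimes> inv (rep (s c \<otimes> g))) = \<phi> (n c) + \<phi> (M c) - \<phi> (n (c + f g))" for c
  proof -
    have gc: "g \<in> carrier G" using subgroup.mem_carrier[OF S g] .
    have nc: "n c \<in> carrier G" "n (c + f g) \<in> carrier G" using subgroup.mem_carrier[OF NS nN] by auto
    have tc: "t [^] idx c \<in> carrier G" "t [^] idx (c + f g) \<in> carrier G" using subgroup.mem_carrier[OF S tp] by auto
    have "s c \<otimes> g \<otimes> inv (rep (s c \<otimes> g)) = s c \<otimes> g \<otimes> inv (s (c + f g))"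
      by (simp only: rep_sg)
    also have "\<dots> = n c \<otimes> M c \<otimes> inv (n (c + f g))"
      unfolding sn[of c] sn[of "c + f g"] M_def
      using gc nc tc by (simp add: m_assoc inv_mult_group)
    finally show ?thesis using homF_3[OF NS hphi nN MN nN] by simp
  qed
  have "cor1 ?K ?N \<phi> g = (\<Sum>r\<in>R. \<phi> (r \<otimes> g \<otimes> inv (rep (r \<otimes> g))))"
  proof -
    have "inv\<^bsub>?K\<^esub> (rep (r \<otimes> g)) = inv (rep (r \<otimes> g))" if "r \<in> R" for r
    proof -
      have "r \<otimes> g \<in> S" using S that RS g by (auto intro: subgroup.m_closed)
      then have "rep (r \<otimes> g) \<in> S" using rep_f RS by auto
      then show ?thesis using S by simp
    qed
    then show ?thesis unfolding cor1_def R_def[symmetric] rep_def[symmetric] by simp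
  qed
  also have "\<dots> = (\<Sum>c\<in>UNIV. \<phi> (s c \<otimes> g \<otimes> inv (rep (s c \<otimes> g))))"
    using bs by (rule sum.reindex_bij_betw[symmetric])
  also have "\<dots> = (\<Sum>c\<in>UNIV. \<phi> (n c) + \<phi> (M c) - \<phi> (n (c + f g)))"
    using trm by simp
  also have "\<dots> = (\<Sum>c\<in>UNIV. \<phi> (n c)) + (\<Sum>c\<in>UNIV. \<phi> (M c)) - (\<Sum>c\<in>UNIV. \<phi> (n (c + f g)))"
    by (simp add: sum.distrib sum_subtractf)
  also have "(\<Sum>c\<in>UNIV. \<phi> (n (c + f g))) = (\<Sum>c\<in>UNIV. \<phi> (n c))"
  proof -
    have "bij_betw (\<lambda>c. c + f g) UNIV UNIV"
      by (rule bij_betw_byWitness[where f' = "\<lambda>c. c - f g"]) auto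
    then show ?thesis by (rule sum.reindex_bij_betw)
  qed
  also have "(\<Sum>c\<in>UNIV. \<phi> (M c)) = (\<Sum>i<?p. \<phi> (t [^] i \<otimes> g \<otimes> inv (t [^] idx (of_nat i + f g))))"
  proof -
    have "(\<Sum>c\<in>UNIV. \<phi> (M c)) = (\<Sum>c\<in>(UNIV::'p mod_ring set). (\<lambda>i. \<phi> (t [^] i \<otimes> g \<otimes> inv (t [^] idx (of_nat i + f g)))) (idx c))"
      unfolding M_def by (simp only: of_nat_idx)
    also have "\<dots> = (\<Sum>i<?p. \<phi> (t [^] i \<otimes> g \<otimes> inv (t [^] idx (of_nat i + f g))))"
      using bij_idx by (rule sum.reindex_bij_betw)
    finally show ?thesis .
  qed
  finally show ?thesis by simp
qed

end

lemma compact_cover: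
  assumes "compactin X S" "\<And>s. s \<in> S \<Longrightarrow> openin X (C s) \<and> s \<in> C s"
  shows "\<exists>F. finite F \<and> F \<subseteq> S \<and> S \<subseteq> \<Union>(C ` F)"
proof -
  have "(\<forall>U \<in> C ` S. openin X U) \<and> S \<subseteq> \<Union>(C ` S)" using assms(2) by auto
  then obtain \<F> where F: "finite \<F>" "\<F> \<subseteq> C ` S" "S \<subseteq> \<Union>\<F>"
    using assms(1) unfolding compactin_def by meson
  then obtain F where "F \<subseteq> S" "finite F" "\<F> = C ` F" using finite_subset_image by meson
  then show ?thesis using F by auto
qed

lemma openin_finite_Inter_top:
  assumes "finite F" "\<And>s. s \<in> F \<Longrightarrow> openin X (B s)"
  shows "openin X (topspace X \<inter> \<Inter>(B ` F))"
proof -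
  have "topspace X \<inter> \<Inter>(B ` F) = \<Inter>(insert (topspace X) (B ` F))" by auto
  moreover have "openin X (\<Inter>(insert (topspace X) (B ` F)))"
    by (rule openin_Inter) (use assms in auto)
  ultimately show ?thesis by simp
qed

context group
begin

lemma tg_mult: "topological_group G T \<Longrightarrow> continuous_map (prod_topology T T) T (\<lambda>(x,y). x \<otimes> y)"
  unfolding topological_group_def by simp
lemma tg_inv: "topological_group G T \<Longrightarrow> continuous_map T T (\<lambda>x. inv x)"
  unfolding topological_group_def by simp
lemma tg_top: "topological_group G T \<Longrightarrow> topspace T = carrier G"
  unfolding topological_group_def by simp

lemma lmul_cont:
  assumes tg: "topological_group G T" and a: "a \<in> carrier G"
  shows "continuous_map T T (\<lambda>y. a \<otimes> y)"
proof -
  have "continuous_map T (prod_topology T T) (\<lambda>y. (a, y))"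
    by (rule continuous_map_pairedI) (use a tg_top[OF tg] in auto)
  then have "continuous_map T T ((\<lambda>(x,y). x \<otimes> y) \<circ> (\<lambda>y. (a, y)))"
    using tg_mult[OF tg] by (rule continuous_map_compose)
  then show ?thesis by (simp add: o_def)
qed

lemma rmul_cont:
  assumes tg: "topological_group G T" and a: "a \<in> carrier G"
  shows "continuous_map T T (\<lambda>y. y \<otimes> a)"
proof -
  have "continuous_map T (prod_topology T T) (\<lambda>y. (y, a))"
    by (rule continuous_map_pairedI) (use a tg_top[OF tg] in auto)
  then have "continuous_map T T ((\<lambda>(x,y). x \<otimes> y) \<circ> (\<lambda>y. (y, a)))"
    using tg_mult[OF tg] by (rule continuous_map_compose)
  then show ?thesis by (simp add: o_def)
qed

lemma openin_lcoset:
  assumes tg: "topological_group G T" and V: "openin T V" and a: "a \<in> carrier G"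
  shows "openin T (a <# V)"
proof -
  have Vc: "V \<subseteq> carrier G" using openin_subset[OF V] tg_top[OF tg] by simp
  have "openin T {y \<in> topspace T. inv a \<otimes> y \<in> V}"
    using lmul_cont[OF tg inv_closed[OF a]] V by (rule openin_continuous_map_preimage)
  moreover have "{y \<in> topspace T. inv a \<otimes> y \<in> V} = a <# V"
  proof
    show "{y \<in> topspace T. inv a \<otimes> y \<in> V} \<subseteq> a <# V"
    proof
      fix y assume y: "y \<in> {y \<in> topspace T. inv a \<otimes> y \<in> V}"
      then have yc: "y \<in> carrier G" using tg_top[OF tg] by simp
      have "y = a \<otimes> (inv a \<otimes> y)" using a yc by (simp add: m_assoc[symmetric])
      then show "y \<in> a <# V" unfolding l_coset_def using y by blast
    qed
    show "a <# V \<subseteq> {y \<in> topspace T. inv a \<otimes> y \<in> V}"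
    proof
      fix y assume "y \<in> a <# V"
      then obtain v where v: "v \<in> V" "y = a \<otimes> v" unfolding l_coset_def by auto
      have vc: "v \<in> carrier G" using v Vc by auto
      have "inv a \<otimes> y = v" using v(2) a vc by (simp add: m_assoc[symmetric])
      then show "y \<in> {y \<in> topspace T. inv a \<otimes> y \<in> V}" using v a vc tg_top[OF tg] by simp
    qed
  qed
  ultimately show ?thesis by simp
qed

lemma clopen_nbhd:
  assumes pg: "profinite_group G T" and W: "openin T W" "\<one> \<in> W"
  shows "\<exists>K. openin T K \<and> closedin T K \<and> \<one> \<in> K \<and> K \<subseteq> W"
proof -
  have tg: "topological_group G T" and cs: "compact_space T" and hs: "Hausdorff_space T"
    and td: "totally_disconnected_space T" using pg unfolding profinite_group_def by auto
  have one: "\<one> \<in> topspace T" using tg_top[OF tg] by simp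
  have "connectedin T (connected_component_of_set T \<one>)" by (rule connectedin_connected_component_of)
  then obtain x where x: "connected_component_of_set T \<one> \<subseteq> {x}"
    using td unfolding totally_disconnected_space_def by blast
  have "\<one> \<in> connected_component_of_set T \<one>" using one connected_component_of_refl by fastforce
  then have cc: "connected_component_of_set T \<one> = {\<one>}" using x by auto
  have C: "{\<one>} \<in> connected_components_of T" unfolding connected_components_of_def
    using cc one by (metis image_eqI)
  have lc: "locally_compact_space T" using cs by (rule compact_imp_locally_compact_space)
  have cin: "compactin T {\<one>}" using one by simp
  obtain U V where UV: "openin T U" "openin T V" "disjnt U V" "U \<union> V = topspace T" "{\<one>} \<subseteq> U" "U \<subseteq> W"
    using wilder_locally_compact_component_thm[OF lc hs C cin W(1)] W(2) by blast
  have "U = topspace T - V" using UV(3,4) by (auto simp: disjnt_def)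
  then have "closedin T U" using UV(2) by auto
  then show ?thesis using UV by auto
qed

lemma mult_nbhd:
  assumes tg: "topological_group G T" and cs: "compact_space T"
    and K: "openin T K" "closedin T K"
  shows "\<exists>B. openin T B \<and> \<one> \<in> B \<and> (\<forall>k\<in>K. \<forall>b\<in>B. k \<otimes> b \<in> K)"
proof -
  have top: "topspace T = carrier G" using tg by (rule tg_top)
  define Om where "Om = {z \<in> topspace (prod_topology T T). (\<lambda>(x,y). x \<otimes> y) z \<in> K}"
  have Om: "openin (prod_topology T T) Om" unfolding Om_def
    using tg_mult[OF tg] K(1) by (rule openin_continuous_map_preimage)
  have Kc: "K \<subseteq> carrier G" using openin_subset[OF K(1)] top by simp
  have "\<forall>k\<in>K. \<exists>AB. openin T (fst AB) \<and> openin T (snd AB) \<and> k \<in> fst AB \<and> \<one> \<in> snd AB \<and> fst AB \<times> snd AB \<subseteq> Om"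
  proof
    fix k assume k: "k \<in> K"
    have kO: "(k, \<one>) \<in> Om" unfolding Om_def using k Kc top by auto
    have "\<forall>x y. (x,y) \<in> Om \<longrightarrow> (\<exists>U V. openin T U \<and> openin T V \<and> x \<in> U \<and> y \<in> V \<and> U \<times> V \<subseteq> Om)"
      using Om by (simp only: openin_prod_topology_alt)
    then have "\<exists>U V. openin T U \<and> openin T V \<and> k \<in> U \<and> \<one> \<in> V \<and> U \<times> V \<subseteq> Om"
      using kO by blast
    then obtain A B where "openin T A" "openin T B" "k \<in> A" "\<one> \<in> B" "A \<times> B \<subseteq> Om"
      by auto
    then show "\<exists>AB. openin T (fst AB) \<and> openin T (snd AB) \<and> k \<in> fst AB \<and> \<one> \<in> snd AB \<and> fst AB \<times> snd AB \<subseteq> Om"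
      by (intro exI[of _ "(A,B)"]) simp
  qed
  then have "\<exists>AB. \<forall>k\<in>K. openin T (fst (AB k)) \<and> openin T (snd (AB k)) \<and> k \<in> fst (AB k) \<and> \<one> \<in> snd (AB k) \<and> fst (AB k) \<times> snd (AB k) \<subseteq> Om"
    by (rule bchoice)
  then obtain AB where AB0: "\<forall>k\<in>K. openin T (fst (AB k)) \<and> openin T (snd (AB k)) \<and> k \<in> fst (AB k) \<and> \<one> \<in> snd (AB k) \<and> fst (AB k) \<times> snd (AB k) \<subseteq> Om"
    ..
  have AB: "openin T (fst (AB k)) \<and> openin T (snd (AB k)) \<and> k \<in> fst (AB k) \<and> \<one> \<in> snd (AB k) \<and> fst (AB k) \<times> snd (AB k) \<subseteq> Om"
    if "k \<in> K" for k using AB0 that by (rule bspec)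
  have Kcomp: "compactin T K" using cs K(2) by (rule closedin_compact_space)
  have "\<exists>F. finite F \<and> F \<subseteq> K \<and> K \<subseteq> \<Union>((\<lambda>k. fst (AB k)) ` F)"
    by (rule compact_cover[OF Kcomp]) (use AB in simp)
  then obtain F where F: "finite F" "F \<subseteq> K" "K \<subseteq> \<Union>((\<lambda>k. fst (AB k)) ` F)" by auto
  define B where "B = topspace T \<inter> \<Inter>((\<lambda>k. snd (AB k)) ` F)"
  have oB: "openin T B" unfolding B_def using F(1)
  proof (rule openin_finite_Inter_top)
    fix s assume "s \<in> F"
    then have "s \<in> K" using F(2) by auto
    then show "openin T (snd (AB s))" using AB by simp
  qed
  have oneB: "\<one> \<in> B" unfolding B_def using AB F(2) top by auto
  have "\<forall>k\<in>K. \<forall>b\<in>B. k \<otimes> b \<in> K"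
  proof (intro ballI)
    fix k b assume k: "k \<in> K" and b: "b \<in> B"
    obtain j where j: "j \<in> F" "k \<in> fst (AB j)" using F(3) k by auto
    have jK: "j \<in> K" using j(1) F(2) by auto
    have "b \<in> snd (AB j)" using b j(1) unfolding B_def by auto
    then have "(k, b) \<in> fst (AB j) \<times> snd (AB j)" using j(2) by simp
    then have "(k, b) \<in> Om" using AB[OF jK] by auto
    then show "k \<otimes> b \<in> K" unfolding Om_def by simp
  qed
  then show ?thesis using oB oneB by auto
qed

end

context group
begin

lemma canc1 [simp]: "x \<in> carrier G \<Longrightarrow> y \<in> carrier G \<Longrightarrow> x \<otimes> (inv x \<otimes> y) = y"
  by (simp add: m_assoc[symmetric])
lemma canc2 [simp]: "x \<in> carrier G \<Longrightarrow> y \<in> carrier G \<Longrightarrow> inv x \<otimes> (x \<otimes> y) = y"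
  by (simp add: m_assoc[symmetric])

lemma open_subgroup_in:
  assumes pg: "profinite_group G T" and W: "openin T W" "\<one> \<in> W"
  shows "\<exists>V. subgroup V G \<and> openin T V \<and> V \<subseteq> W"
proof -
  have tg: "topological_group G T" and cs: "compact_space T"
    using pg unfolding profinite_group_def by auto
  have top: "topspace T = carrier G" using tg by (rule tg_top)
  obtain K where K: "openin T K" "closedin T K" "\<one> \<in> K" "K \<subseteq> W"
    using clopen_nbhd[OF pg W] by auto
  have Kc: "K \<subseteq> carrier G" using openin_subset[OF K(1)] top by simp
  obtain B where B: "openin T B" "\<one> \<in> B" "\<forall>k\<in>K. \<forall>b\<in>B. k \<otimes> b \<in> K"
    using mult_nbhd[OF tg cs K(1,2)] by auto
  have Bc: "B \<subseteq> carrier G" using openin_subset[OF B(1)] top by simp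
  define B' where "B' = B \<inter> {y \<in> topspace T. inv y \<in> B}"
  have oB': "openin T B'" unfolding B'_def
    using B(1) openin_continuous_map_preimage[OF tg_inv[OF tg] B(1)] by (rule openin_Int)
  have oneB': "\<one> \<in> B'" unfolding B'_def using B(2) top by simp
  have B'c: "B' \<subseteq> carrier G" using Bc unfolding B'_def by auto
  define V where "V = {g \<in> carrier G. \<forall>k\<in>K. k \<otimes> g \<in> K \<and> k \<otimes> inv g \<in> K}"
  have sV: "subgroup V G"
  proof (rule subgroupI)
    show "V \<subseteq> carrier G" unfolding V_def by auto
    have "\<one> \<in> V" unfolding V_def using Kc by auto
    then show "V \<noteq> {}" by auto
    fix a b assume a: "a \<in> V" and b: "b \<in> V"
    have ac: "a \<in> carrier G" and bc: "b \<in> carrier G" using a b unfolding V_def by auto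
    show "inv a \<in> V" unfolding V_def using a ac unfolding V_def by auto
    show "a \<otimes> b \<in> V" unfolding V_def
    proof (intro CollectI conjI ballI)
      show "a \<otimes> b \<in> carrier G" using ac bc by simp
      fix k assume k: "k \<in> K"
      have kc: "k \<in> carrier G" using k Kc by auto
      have "k \<otimes> a \<in> K" using a k unfolding V_def by auto
      then have "k \<otimes> a \<otimes> b \<in> K" using b unfolding V_def by auto
      then show "k \<otimes> (a \<otimes> b) \<in> K" using kc ac bc by (simp add: m_assoc)
      have "k \<otimes> inv b \<in> K" using b k unfolding V_def by auto
      then have "k \<otimes> inv b \<otimes> inv a \<in> K" using a unfolding V_def by auto
      then show "k \<otimes> inv (a \<otimes> b) \<in> K" using kc ac bc by (simp add: m_assoc inv_mult_group)
    qed
  qed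
  have B'V: "B' \<subseteq> V"
  proof
    fix b assume b: "b \<in> B'"
    then have "b \<in> B" "inv b \<in> B" "b \<in> carrier G" unfolding B'_def using top by auto
    then show "b \<in> V" unfolding V_def using B(3) by auto
  qed
  have VK: "V \<subseteq> K"
  proof
    fix g assume "g \<in> V"
    then have "\<one> \<otimes> g \<in> K" "g \<in> carrier G" using K(3) unfolding V_def by auto
    then show "g \<in> K" by simp
  qed
  have "openin T V"
  proof (subst openin_subopen, intro ballI)
    fix x assume x: "x \<in> V"
    have xc: "x \<in> carrier G" using subgroup.mem_carrier[OF sV x] .
    have "openin T (x <# B')" using tg oB' xc by (rule openin_lcoset)
    moreover have "x \<in> x <# B'" unfolding l_coset_def using oneB' xc by force
    moreover have "x <# B' \<subseteq> V"
    proof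
      fix y assume "y \<in> x <# B'"
      then obtain b where b: "b \<in> B'" "y = x \<otimes> b" unfolding l_coset_def by auto
      have "b \<in> V" using b(1) B'V by auto
      then have "x \<otimes> b \<in> V" using subgroup.m_closed[OF sV x] by simp
      then show "y \<in> V" using b(2) by simp
    qed
    ultimately show "\<exists>U. openin T U \<and> x \<in> U \<and> U \<subseteq> V" by blast
  qed
  then show ?thesis using sV VK K(4) by auto
qed

lemma normal_core:
  assumes pg: "profinite_group G T" and V0: "subgroup V0 G" "openin T V0"
  shows "\<exists>W. W \<lhd> G \<and> openin T W \<and> W \<subseteq> V0"
proof -
  have tg: "topological_group G T" and cs: "compact_space T"
    using pg unfolding profinite_group_def by auto
  have top: "topspace T = carrier G" using tg by (rule tg_top)
  have V0c: "V0 \<subseteq> carrier G" using V0(1) by (rule subgroup.subset)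
  have "compactin T (carrier G)" using cs top unfolding compact_space_def by simp
  moreover have "openin T (x <# V0) \<and> x \<in> x <# V0" if "x \<in> carrier G" for x
  proof
    show "openin T (x <# V0)" using tg V0(2) that by (rule openin_lcoset)
    show "x \<in> x <# V0" unfolding l_coset_def using that subgroup.one_closed[OF V0(1)] by force
  qed
  ultimately have "\<exists>F. finite F \<and> F \<subseteq> carrier G \<and> carrier G \<subseteq> \<Union>((\<lambda>x. x <# V0) ` F)"
    by (rule compact_cover)
  then obtain F where F: "finite F" "F \<subseteq> carrier G" "carrier G \<subseteq> \<Union>((\<lambda>x. x <# V0) ` F)" by auto
  define W where "W = {w \<in> carrier G. \<forall>g\<in>carrier G. inv g \<otimes> w \<otimes> g \<in> V0}"
  have conj_mult: "inv g \<otimes> (a \<otimes> b) \<otimes> g = (inv g \<otimes> a \<otimes> g) \<otimes> (inv g \<otimes> b \<otimes> g)"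
    if "g \<in> carrier G" "a \<in> carrier G" "b \<in> carrier G" for g a b
    using that by (simp add: m_assoc)
  have sW: "subgroup W G"
  proof (rule subgroupI)
    show "W \<subseteq> carrier G" unfolding W_def by auto
    have "\<one> \<in> W" unfolding W_def using subgroup.one_closed[OF V0(1)] by simp
    then show "W \<noteq> {}" by auto
    fix a b assume a: "a \<in> W" and b: "b \<in> W"
    have ac: "a \<in> carrier G" and bc: "b \<in> carrier G" using a b unfolding W_def by auto
    show "inv a \<in> W" unfolding W_def
    proof (intro CollectI conjI ballI)
      show "inv a \<in> carrier G" using ac by simp
      fix g assume g: "g \<in> carrier G"
      have "inv g \<otimes> a \<otimes> g \<in> V0" using a g unfolding W_def by auto
      then have "inv (inv g \<otimes> a \<otimes> g) \<in> V0" using subgroup.m_inv_closed[OF V0(1)] by simp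
      moreover have "inv (inv g \<otimes> a \<otimes> g) = inv g \<otimes> inv a \<otimes> g" using g ac by (simp add: inv_mult_group m_assoc)
      ultimately show "inv g \<otimes> inv a \<otimes> g \<in> V0" by simp
    qed
    show "a \<otimes> b \<in> W" unfolding W_def
    proof (intro CollectI conjI ballI)
      show "a \<otimes> b \<in> carrier G" using ac bc by simp
      fix g assume g: "g \<in> carrier G"
      have "inv g \<otimes> a \<otimes> g \<in> V0" "inv g \<otimes> b \<otimes> g \<in> V0" using a b g unfolding W_def by auto
      then show "inv g \<otimes> (a \<otimes> b) \<otimes> g \<in> V0" unfolding conj_mult[OF g ac bc]
        using subgroup.m_closed[OF V0(1)] by simp
    qed
  qed
  have nW: "W \<lhd> G" unfolding normal_inv_iff
  proof (intro conjI ballI)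
    show "subgroup W G" by fact
    fix x h assume x: "x \<in> carrier G" and h: "h \<in> W"
    have hc: "h \<in> carrier G" using h unfolding W_def by auto
    show "x \<otimes> h \<otimes> inv x \<in> W" unfolding W_def
    proof (intro CollectI conjI ballI)
      show "x \<otimes> h \<otimes> inv x \<in> carrier G" using x hc by simp
      fix g assume g: "g \<in> carrier G"
      have "inv (inv x \<otimes> g) \<otimes> h \<otimes> (inv x \<otimes> g) \<in> V0" using h g x unfolding W_def by simp
      moreover have "inv (inv x \<otimes> g) \<otimes> h \<otimes> (inv x \<otimes> g) = inv g \<otimes> (x \<otimes> h \<otimes> inv x) \<otimes> g"
        using x g hc by (simp add: inv_mult_group m_assoc)
      ultimately show "inv g \<otimes> (x \<otimes> h \<otimes> inv x) \<otimes> g \<in> V0" by simp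
    qed
  qed
  have WV0: "W \<subseteq> V0"
  proof
    fix w assume "w \<in> W"
    then have "inv \<one> \<otimes> w \<otimes> \<one> \<in> V0" "w \<in> carrier G" unfolding W_def by auto
    then show "w \<in> V0" by simp
  qed
  define C where "C x = {w \<in> topspace T. (\<lambda>w. inv x \<otimes> w \<otimes> x) w \<in> V0}" for x
  have oC: "openin T (C x)" if "x \<in> F" for x
  proof -
    have xc: "x \<in> carrier G" using that F(2) by auto
    have "continuous_map T T ((\<lambda>y. y \<otimes> x) \<circ> (\<lambda>y. inv x \<otimes> y))"
      using lmul_cont[OF tg inv_closed[OF xc]] rmul_cont[OF tg xc] by (rule continuous_map_compose)
    then have "continuous_map T T (\<lambda>w. inv x \<otimes> w \<otimes> x)" by (simp add: o_def)
    then show ?thesis unfolding C_def using V0(2) by (rule openin_continuous_map_preimage)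
  qed
  have "W = topspace T \<inter> \<Inter>(C ` F)"
  proof
    show "W \<subseteq> topspace T \<inter> \<Inter>(C ` F)"
    proof
      fix w assume w: "w \<in> W"
      have "w \<in> C x" if "x \<in> F" for x
      proof -
        have "x \<in> carrier G" using that F(2) by auto
        then show ?thesis using w top unfolding W_def C_def by auto
      qed
      then show "w \<in> topspace T \<inter> \<Inter>(C ` F)" using w top unfolding W_def by auto
    qed
    show "topspace T \<inter> \<Inter>(C ` F) \<subseteq> W"
    proof
      fix w assume w: "w \<in> topspace T \<inter> \<Inter>(C ` F)"
      have wc: "w \<in> carrier G" using w top by auto
      have "inv g \<otimes> w \<otimes> g \<in> V0" if g: "g \<in> carrier G" for g
      proof -
        obtain x where x: "x \<in> F" "g \<in> x <# V0" using F(3) g by auto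
        obtain u where u: "u \<in> V0" "g = x \<otimes> u" using x(2) unfolding l_coset_def by auto
        have xc: "x \<in> carrier G" using x(1) F(2) by auto
        have uc: "u \<in> carrier G" using u(1) V0c by auto
        have "w \<in> C x" using w x(1) by auto
        then have c: "inv x \<otimes> w \<otimes> x \<in> V0" unfolding C_def by simp
        have "inv u \<otimes> (inv x \<otimes> w \<otimes> x) \<otimes> u \<in> V0"
          using subgroup.m_closed[OF V0(1) subgroup.m_closed[OF V0(1) subgroup.m_inv_closed[OF V0(1) u(1)] c] u(1)] .
        moreover have "inv u \<otimes> (inv x \<otimes> w \<otimes> x) \<otimes> u = inv g \<otimes> w \<otimes> g"
          using u(2) xc uc wc by (simp add: inv_mult_group m_assoc)
        ultimately show ?thesis by simp
      qed
      then show "w \<in> W" unfolding W_def using wc by auto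
    qed
  qed
  moreover have "openin T (topspace T \<inter> \<Inter>(C ` F))" using F(1) oC by (rule openin_finite_Inter_top)
  ultimately show ?thesis using nW WV0 by auto
qed

end

context group
begin

lemma subgroup_Inter_carrier:
  assumes "\<And>x. x \<in> F \<Longrightarrow> subgroup (V x) G"
  shows "subgroup (carrier G \<inter> \<Inter>(V ` F)) G"
proof (rule subgroupI)
  show "carrier G \<inter> \<Inter>(V ` F) \<subseteq> carrier G" by auto
  have "\<one> \<in> carrier G \<inter> \<Inter>(V ` F)" using subgroup.one_closed[OF assms] by auto
  then show "carrier G \<inter> \<Inter>(V ` F) \<noteq> {}" by auto
  fix a b assume a: "a \<in> carrier G \<inter> \<Inter>(V ` F)" and b: "b \<in> carrier G \<inter> \<Inter>(V ` F)"
  show "inv a \<in> carrier G \<inter> \<Inter>(V ` F)" using a subgroup.m_inv_closed[OF assms] by auto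
  show "a \<otimes> b \<in> carrier G \<inter> \<Inter>(V ` F)" using a b subgroup.m_closed[OF assms] by auto
qed

lemma fiber_open:
  assumes tg: "topological_group G T" and S: "S \<subseteq> carrier G"
    and d: "continuous_map (subtopology T S) (discrete_topology UNIV) d" and s: "s \<in> S"
  shows "\<exists>Ob. openin T Ob \<and> s \<in> Ob \<and> (\<forall>x\<in>S \<inter> Ob. d x = d s)"
proof -
  have top: "topspace T = carrier G" using tg by (rule tg_top)
  have "openin (subtopology T S) {x \<in> topspace (subtopology T S). d x \<in> {d s}}"
    using d by (rule openin_continuous_map_preimage) simp
  then obtain Ob where Ob: "openin T Ob" "{x \<in> topspace (subtopology T S). d x \<in> {d s}} = Ob \<inter> S"
    unfolding openin_subtopology by auto
  have "s \<in> Ob" using Ob(2) s S top by auto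
  moreover have "\<forall>x\<in>S \<inter> Ob. d x = d s"
  proof
    fix x assume "x \<in> S \<inter> Ob"
    then have "x \<in> Ob \<inter> S" by auto
    then show "d x = d s" unfolding Ob(2)[symmetric] by simp
  qed
  ultimately show ?thesis using Ob(1) by auto
qed

lemma unif1:
  assumes pg: "profinite_group G T" and S: "closedin T S"
    and d: "continuous_map (subtopology T S) (discrete_topology UNIV) d"
  shows "\<exists>V. subgroup V G \<and> openin T V \<and> (\<forall>s\<in>S. \<forall>v\<in>V. s \<otimes> v \<in> S \<longrightarrow> d (s \<otimes> v) = d s)"
proof -
  have tg: "topological_group G T" and cs: "compact_space T"
    using pg unfolding profinite_group_def by auto
  have top: "topspace T = carrier G" using tg by (rule tg_top)
  have Sc: "S \<subseteq> carrier G" using closedin_subset[OF S] top by simp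
  have "\<forall>s\<in>S. \<exists>V. subgroup V G \<and> openin T V \<and> (\<forall>u\<in>V. s \<otimes> u \<in> S \<longrightarrow> d (s \<otimes> u) = d s)"
  proof
    fix s assume s: "s \<in> S"
    have sc: "s \<in> carrier G" using s Sc by auto
    obtain Ob where Ob: "openin T Ob" "s \<in> Ob" "\<forall>x\<in>S \<inter> Ob. d x = d s"
      using fiber_open[OF tg Sc d s] by auto
    define P where "P = {y \<in> topspace T. s \<otimes> y \<in> Ob}"
    have oP: "openin T P" unfolding P_def using lmul_cont[OF tg sc] Ob(1) by (rule openin_continuous_map_preimage)
    have "\<one> \<in> P" unfolding P_def using Ob(2) sc top by simp
    then obtain V where V: "subgroup V G" "openin T V" "V \<subseteq> P" using open_subgroup_in[OF pg oP] by auto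
    have "\<forall>u\<in>V. s \<otimes> u \<in> S \<longrightarrow> d (s \<otimes> u) = d s"
    proof (intro ballI impI)
      fix u assume u: "u \<in> V" "s \<otimes> u \<in> S"
      have "s \<otimes> u \<in> Ob" using u(1) V(3) unfolding P_def by auto
      then show "d (s \<otimes> u) = d s" using Ob(3) u(2) by auto
    qed
    then show "\<exists>V. subgroup V G \<and> openin T V \<and> (\<forall>u\<in>V. s \<otimes> u \<in> S \<longrightarrow> d (s \<otimes> u) = d s)"
      using V by auto
  qed
  then have "\<exists>Vf. \<forall>s\<in>S. subgroup (Vf s) G \<and> openin T (Vf s) \<and> (\<forall>u\<in>Vf s. s \<otimes> u \<in> S \<longrightarrow> d (s \<otimes> u) = d s)"
    by (rule bchoice)
  then obtain Vf where Vf0: "\<forall>s\<in>S. subgroup (Vf s) G \<and> openin T (Vf s) \<and> (\<forall>u\<in>Vf s. s \<otimes> u \<in> S \<longrightarrow> d (s \<otimes> u) = d s)" ..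
  have Vf: "subgroup (Vf s) G" "openin T (Vf s)" "\<And>u. u \<in> Vf s \<Longrightarrow> s \<otimes> u \<in> S \<Longrightarrow> d (s \<otimes> u) = d s"
    if "s \<in> S" for s using bspec[OF Vf0 that] by auto
  have Scomp: "compactin T S" using cs S by (rule closedin_compact_space)
  have "\<exists>F. finite F \<and> F \<subseteq> S \<and> S \<subseteq> \<Union>((\<lambda>s. s <# Vf s) ` F)"
  proof (rule compact_cover[OF Scomp])
    fix s assume s: "s \<in> S"
    have sc: "s \<in> carrier G" using s Sc by auto
    show "openin T (s <# Vf s) \<and> s \<in> s <# Vf s"
    proof
      show "openin T (s <# Vf s)" using tg Vf(2)[OF s] sc by (rule openin_lcoset)
      show "s \<in> s <# Vf s" unfolding l_coset_def using subgroup.one_closed[OF Vf(1)[OF s]] sc by force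
    qed
  qed
  then obtain F where F: "finite F" "F \<subseteq> S" "S \<subseteq> \<Union>((\<lambda>s. s <# Vf s) ` F)" by auto
  define V where "V = carrier G \<inter> \<Inter>(Vf ` F)"
  have sV: "subgroup V G" unfolding V_def using Vf(1) F(2) by (intro subgroup_Inter_carrier) auto
  have oV: "openin T V" unfolding V_def top[symmetric] using F(1)
    by (rule openin_finite_Inter_top) (use Vf(2) F(2) in auto)
  have "\<forall>s\<in>S. \<forall>v\<in>V. s \<otimes> v \<in> S \<longrightarrow> d (s \<otimes> v) = d s"
  proof (intro ballI impI)
    fix s v assume s: "s \<in> S" and v: "v \<in> V" and sv: "s \<otimes> v \<in> S"
    obtain x where x: "x \<in> F" "s \<in> x <# Vf x" using F(3) s by auto
    have xS: "x \<in> S" using x(1) F(2) by auto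
    obtain u where u: "u \<in> Vf x" "s = x \<otimes> u" using x(2) unfolding l_coset_def by auto
    have vx: "v \<in> Vf x" using v x(1) unfolding V_def by auto
    have xc: "x \<in> carrier G" using xS Sc by auto
    have uc: "u \<in> carrier G" using subgroup.mem_carrier[OF Vf(1)[OF xS] u(1)] .
    have vc: "v \<in> carrier G" using subgroup.mem_carrier[OF Vf(1)[OF xS] vx] .
    have uv: "u \<otimes> v \<in> Vf x" using subgroup.m_closed[OF Vf(1)[OF xS] u(1) vx] .
    have e: "s \<otimes> v = x \<otimes> (u \<otimes> v)" using u(2) xc uc vc by (simp add: m_assoc)
    have d1: "d s = d x" using Vf(3)[OF xS u(1)] s u(2) by simp
    have d2: "d (s \<otimes> v) = d x" using Vf(3)[OF xS uv] sv e by simp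
    show "d (s \<otimes> v) = d s" using d1 d2 by simp
  qed
  then show ?thesis using sV oV by auto
qed

end

context group
begin

lemma lcoset_self:
  assumes "subgroup V G" "x \<in> carrier G"
  shows "x \<in> x <# V"
  unfolding l_coset_def using subgroup.one_closed[OF assms(1)] assms(2) by force

lemma openin_sub_of:
  assumes "openin T Z" "Z \<subseteq> A" shows "openin (subtopology T A) Z"
  unfolding openin_subtopology using assms by (intro exI[of _ Z]) auto

lemma inv_cont1:
  assumes tg: "topological_group G T" and V: "subgroup V G" "openin T V" and A: "A \<subseteq> carrier G"
    and inv: "\<And>x w. x \<in> A \<Longrightarrow> w \<in> V \<Longrightarrow> x \<otimes> w \<in> A \<and> f (x \<otimes> w) = f x"
  shows "continuous_map (subtopology T A) (discrete_topology UNIV) f"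
  unfolding continuous_map_openin_preimage_eq
proof (intro conjI allI impI)
  show "f \<in> topspace (subtopology T A) \<rightarrow> topspace (discrete_topology UNIV)" by simp
  fix U :: "'c set" assume "openin (discrete_topology UNIV) U"
  let ?Z = "topspace (subtopology T A) \<inter> f -` U"
  show "openin (subtopology T A) ?Z"
  proof (subst openin_subopen, intro ballI)
    fix x assume x: "x \<in> ?Z"
    have top: "topspace T = carrier G" using tg by (rule tg_top)
    have xA: "x \<in> A" and fx: "f x \<in> U" using x by auto
    have xc: "x \<in> carrier G" using xA A by auto
    have sub: "x <# V \<subseteq> ?Z"
    proof
      fix y assume "y \<in> x <# V"
      then obtain w where w: "w \<in> V" "y = x \<otimes> w" unfolding l_coset_def by auto
      then show "y \<in> ?Z" using inv[OF xA w(1)] fx A top by auto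
    qed
    have "openin T (x <# V)" using tg V(2) xc by (rule openin_lcoset)
    moreover have "x <# V \<subseteq> A" using sub by auto
    ultimately have "openin (subtopology T A) (x <# V)" by (rule openin_sub_of)
    then show "\<exists>Z. openin (subtopology T A) Z \<and> x \<in> Z \<and> Z \<subseteq> ?Z"
      using sub lcoset_self[OF V(1) xc] by auto
  qed
qed

lemma inv_cont2:
  assumes tg: "topological_group G T" and V: "subgroup V G" "openin T V" and A: "A \<subseteq> carrier G"
    and clo: "\<And>x w. x \<in> A \<Longrightarrow> w \<in> V \<Longrightarrow> x \<otimes> w \<in> A"
    and inv: "\<And>x y w w'. x \<in> A \<Longrightarrow> y \<in> A \<Longrightarrow> w \<in> V \<Longrightarrow> w' \<in> V \<Longrightarrow> f (x \<otimes> w, y \<otimes> w') = f (x, y)"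
  shows "continuous_map (prod_topology (subtopology T A) (subtopology T A)) (discrete_topology UNIV) f"
  unfolding continuous_map_openin_preimage_eq
proof (intro conjI allI impI)
  show "f \<in> topspace (prod_topology (subtopology T A) (subtopology T A)) \<rightarrow> topspace (discrete_topology UNIV)" by simp
  fix U :: "'c set" assume "openin (discrete_topology UNIV) U"
  let ?P = "prod_topology (subtopology T A) (subtopology T A)"
  let ?Z = "topspace ?P \<inter> f -` U"
  have top: "topspace T = carrier G" using tg by (rule tg_top)
  show "openin ?P ?Z"
  proof (subst openin_subopen, intro ballI)
    fix z assume z: "z \<in> ?Z"
    obtain x y where xy: "z = (x, y)" by fastforce
    have xA: "x \<in> A" and yA: "y \<in> A" and fz: "f (x, y) \<in> U" using z xy top A by auto
    have xc: "x \<in> carrier G" using xA A by auto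
    have yc: "y \<in> carrier G" using yA A by auto
    have subx: "x <# V \<subseteq> A"
    proof
      fix a assume "a \<in> x <# V"
      then obtain w where "w \<in> V" "a = x \<otimes> w" unfolding l_coset_def by auto
      then show "a \<in> A" using clo[OF xA] by auto
    qed
    have suby: "y <# V \<subseteq> A"
    proof
      fix a assume "a \<in> y <# V"
      then obtain w where "w \<in> V" "a = y \<otimes> w" unfolding l_coset_def by auto
      then show "a \<in> A" using clo[OF yA] by auto
    qed
    have sub: "(x <# V) \<times> (y <# V) \<subseteq> ?Z"
    proof
      fix p assume "p \<in> (x <# V) \<times> (y <# V)"
      then obtain w w' where w: "w \<in> V" "w' \<in> V" "p = (x \<otimes> w, y \<otimes> w')" unfolding l_coset_def by auto
      have "x \<otimes> w \<in> A" "y \<otimes> w' \<in> A" using clo[OF xA w(1)] clo[OF yA w(2)] by auto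
      moreover have "f p \<in> U" using inv[OF xA yA w(1,2)] fz w(3) by simp
      ultimately show "p \<in> ?Z" using w(3) A top by auto
    qed
    have "openin (subtopology T A) (x <# V)" using openin_lcoset[OF tg V(2) xc] subx by (rule openin_sub_of)
    moreover have "openin (subtopology T A) (y <# V)" using openin_lcoset[OF tg V(2) yc] suby by (rule openin_sub_of)
    ultimately have "openin ?P ((x <# V) \<times> (y <# V))" by (simp add: openin_prod_Times_iff)
    moreover have "z \<in> (x <# V) \<times> (y <# V)" using xy lcoset_self[OF V(1) xc] lcoset_self[OF V(1) yc] by simp
    ultimately show "\<exists>Z. openin ?P Z \<and> z \<in> Z \<and> Z \<subseteq> ?Z" using sub by blast
  qed
qed

lemma unif2:
  assumes pg: "profinite_group G T" and S: "closedin T S"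
    and f: "continuous_map (prod_topology (subtopology T S) (subtopology T S)) (discrete_topology UNIV) f"
  shows "\<exists>V. subgroup V G \<and> openin T V \<and> (\<forall>a\<in>S. \<forall>b\<in>S. \<forall>v\<in>V. \<forall>w\<in>V.
           a \<otimes> v \<in> S \<longrightarrow> b \<otimes> w \<in> S \<longrightarrow> f (a \<otimes> v, b \<otimes> w) = f (a, b))"
proof -
  have tg: "topological_group G T" and cs: "compact_space T"
    using pg unfolding profinite_group_def by auto
  have top: "topspace T = carrier G" using tg by (rule tg_top)
  have Sc: "S \<subseteq> carrier G" using closedin_subset[OF S] top by simp
  let ?P = "prod_topology (subtopology T S) (subtopology T S)"
  have Peq: "?P = subtopology (prod_topology T T) (S \<times> S)" by (simp add: subtopology_Times)
  have "\<forall>z\<in>S \<times> S. \<exists>V. subgroup V G \<and> openin T V \<and>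
      (\<forall>u\<in>V. \<forall>u'\<in>V. fst z \<otimes> u \<in> S \<longrightarrow> snd z \<otimes> u' \<in> S \<longrightarrow> f (fst z \<otimes> u, snd z \<otimes> u') = f z)"
  proof
    fix z assume z: "z \<in> S \<times> S"
    obtain a b where ab: "z = (a, b)" by fastforce
    have aS: "a \<in> S" and bS: "b \<in> S" using z ab by auto
    have ac: "a \<in> carrier G" and bc: "b \<in> carrier G" using aS bS Sc by auto
    have "openin ?P {x \<in> topspace ?P. f x \<in> {f (a,b)}}"
      using f by (rule openin_continuous_map_preimage) simp
    then obtain Ob where Ob: "openin (prod_topology T T) Ob" "{x \<in> topspace ?P. f x \<in> {f (a,b)}} = Ob \<inter> (S \<times> S)"
      unfolding Peq openin_subtopology by auto
    have abO: "(a, b) \<in> Ob" using Ob(2) aS bS top Sc by (auto simp: Peq)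
    have fib: "f p = f (a, b)" if "p \<in> Ob" "p \<in> S \<times> S" for p
    proof -
      have "p \<in> Ob \<inter> (S \<times> S)" using that by auto
      then show ?thesis unfolding Ob(2)[symmetric] by simp
    qed
    have "\<forall>x y. (x,y) \<in> Ob \<longrightarrow> (\<exists>U V. openin T U \<and> openin T V \<and> x \<in> U \<and> y \<in> V \<and> U \<times> V \<subseteq> Ob)"
      using Ob(1) by (simp only: openin_prod_topology_alt)
    then have "\<exists>U V. openin T U \<and> openin T V \<and> a \<in> U \<and> b \<in> V \<and> U \<times> V \<subseteq> Ob"
      using abO by blast
    then obtain A B where AB: "openin T A" "openin T B" "a \<in> A" "b \<in> B" "A \<times> B \<subseteq> Ob" by auto
    define P where "P = {y \<in> topspace T. a \<otimes> y \<in> A} \<inter> {y \<in> topspace T. b \<otimes> y \<in> B}"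
    have oP: "openin T P" unfolding P_def
      using openin_continuous_map_preimage[OF lmul_cont[OF tg ac] AB(1)]
        openin_continuous_map_preimage[OF lmul_cont[OF tg bc] AB(2)] by (rule openin_Int)
    have "\<one> \<in> P" unfolding P_def using AB ac bc top by simp
    then obtain V where V: "subgroup V G" "openin T V" "V \<subseteq> P" using open_subgroup_in[OF pg oP] by auto
    have "\<forall>u\<in>V. \<forall>u'\<in>V. fst z \<otimes> u \<in> S \<longrightarrow> snd z \<otimes> u' \<in> S \<longrightarrow> f (fst z \<otimes> u, snd z \<otimes> u') = f z"
    proof (intro ballI impI)
      fix u u' assume u: "u \<in> V" "u' \<in> V" and in1: "fst z \<otimes> u \<in> S" "snd z \<otimes> u' \<in> S"
      have "a \<otimes> u \<in> A" "b \<otimes> u' \<in> B" using u V(3) unfolding P_def by auto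
      then have "(a \<otimes> u, b \<otimes> u') \<in> Ob" using AB(5) by auto
      then show "f (fst z \<otimes> u, snd z \<otimes> u') = f z" using fib in1 ab by auto
    qed
    then show "\<exists>V. subgroup V G \<and> openin T V \<and>
      (\<forall>u\<in>V. \<forall>u'\<in>V. fst z \<otimes> u \<in> S \<longrightarrow> snd z \<otimes> u' \<in> S \<longrightarrow> f (fst z \<otimes> u, snd z \<otimes> u') = f z)"
      using V by auto
  qed
  then have "\<exists>Vf. \<forall>z\<in>S \<times> S. subgroup (Vf z) G \<and> openin T (Vf z) \<and>
      (\<forall>u\<in>Vf z. \<forall>u'\<in>Vf z. fst z \<otimes> u \<in> S \<longrightarrow> snd z \<otimes> u' \<in> S \<longrightarrow> f (fst z \<otimes> u, snd z \<otimes> u') = f z)"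
    by (rule bchoice)
  then obtain Vf where Vf0: "\<forall>z\<in>S \<times> S. subgroup (Vf z) G \<and> openin T (Vf z) \<and>
      (\<forall>u\<in>Vf z. \<forall>u'\<in>Vf z. fst z \<otimes> u \<in> S \<longrightarrow> snd z \<otimes> u' \<in> S \<longrightarrow> f (fst z \<otimes> u, snd z \<otimes> u') = f z)" ..
  have Vf: "subgroup (Vf z) G" "openin T (Vf z)"
     "\<And>u u'. u \<in> Vf z \<Longrightarrow> u' \<in> Vf z \<Longrightarrow> fst z \<otimes> u \<in> S \<Longrightarrow> snd z \<otimes> u' \<in> S \<Longrightarrow> f (fst z \<otimes> u, snd z \<otimes> u') = f z"
    if "z \<in> S \<times> S" for z using bspec[OF Vf0 that] by auto
  have Scomp: "compactin T S" using cs S by (rule closedin_compact_space)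
  have SScomp: "compactin (prod_topology T T) (S \<times> S)" using Scomp by (simp add: compactin_Times)
  define box where "box z = (fst z <# Vf z) \<times> (snd z <# Vf z)" for z
  have "\<exists>F. finite F \<and> F \<subseteq> S \<times> S \<and> S \<times> S \<subseteq> \<Union>(box ` F)"
  proof (rule compact_cover[OF SScomp])
    fix z assume z: "z \<in> S \<times> S"
    have ac: "fst z \<in> carrier G" and bc: "snd z \<in> carrier G" using z Sc by auto
    have o1: "openin T (fst z <# Vf z)" using tg Vf(2)[OF z] ac by (rule openin_lcoset)
    have o2: "openin T (snd z <# Vf z)" using tg Vf(2)[OF z] bc by (rule openin_lcoset)
    show "openin (prod_topology T T) (box z) \<and> z \<in> box z"
      unfolding box_def using o1 o2 lcoset_self[OF Vf(1)[OF z] ac] lcoset_self[OF Vf(1)[OF z] bc]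
      by (auto simp: openin_prod_Times_iff mem_Times_iff)
  qed
  then obtain F where F: "finite F" "F \<subseteq> S \<times> S" "S \<times> S \<subseteq> \<Union>(box ` F)" by auto
  define V where "V = carrier G \<inter> \<Inter>(Vf ` F)"
  have sV: "subgroup V G" unfolding V_def using Vf(1) F(2) by (intro subgroup_Inter_carrier) auto
  have oV: "openin T V" unfolding V_def top[symmetric] using F(1)
    by (rule openin_finite_Inter_top) (use Vf(2) F(2) in auto)
  have key: "f (a \<otimes> v, b \<otimes> w) = f (a, b)"
    if ab: "a \<in> S" "b \<in> S" and vw: "v \<in> V" "w \<in> V" and in1: "a \<otimes> v \<in> S" "b \<otimes> w \<in> S" for a b v w
  proof -
    obtain z where z: "z \<in> F" "(a, b) \<in> box z" using F(3) ab by blast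
    have zS: "z \<in> S \<times> S" using z(1) F(2) by auto
    obtain u where u: "u \<in> Vf z" "a = fst z \<otimes> u" using z(2) unfolding box_def l_coset_def by auto
    obtain u' where u': "u' \<in> Vf z" "b = snd z \<otimes> u'" using z(2) unfolding box_def l_coset_def by auto
    have vz: "v \<in> Vf z" and wz: "w \<in> Vf z" using vw z(1) unfolding V_def by auto
    have xc: "fst z \<in> carrier G" and yc: "snd z \<in> carrier G" using zS Sc by auto
    have uc: "u \<in> carrier G" "u' \<in> carrier G" "v \<in> carrier G" "w \<in> carrier G"
      using subgroup.mem_carrier[OF Vf(1)[OF zS]] u(1) u'(1) vz wz by auto
    have uv: "u \<otimes> v \<in> Vf z" using subgroup.m_closed[OF Vf(1)[OF zS] u(1) vz] .
    have uw: "u' \<otimes> w \<in> Vf z" using subgroup.m_closed[OF Vf(1)[OF zS] u'(1) wz] .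
    have e1: "a \<otimes> v = fst z \<otimes> (u \<otimes> v)" using u(2) xc uc by (simp add: m_assoc)
    have e2: "b \<otimes> w = snd z \<otimes> (u' \<otimes> w)" using u'(2) yc uc by (simp add: m_assoc)
    have d1: "f (a, b) = f z" using Vf(3)[OF zS u(1) u'(1)] ab u(2) u'(2) by simp
    have d2: "f (a \<otimes> v, b \<otimes> w) = f z" using Vf(3)[OF zS uv uw] in1 e1 e2 by simp
    show ?thesis using d1 d2 by simp
  qed
  show ?thesis using sV oV key by blast
qed

end

definition rep :: "('a,'b) monoid_scheme \<Rightarrow> 'a set \<Rightarrow> 'a set \<Rightarrow> 'a \<Rightarrow> 'a" where
  "rep G S V x = (SOME h. h \<in> S \<and> (\<exists>v\<in>V. x = h \<otimes>\<^bsub>G\<^esub> v))"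

definition inv1 :: "('a,'b) monoid_scheme \<Rightarrow> 'a set \<Rightarrow> 'a set \<Rightarrow> ('a \<Rightarrow> 'c) \<Rightarrow> bool" where
  "inv1 G S V d \<longleftrightarrow> (\<forall>s\<in>S. \<forall>v\<in>V. s \<otimes>\<^bsub>G\<^esub> v \<in> S \<longrightarrow> d (s \<otimes>\<^bsub>G\<^esub> v) = d s)"

definition inv2 :: "('a,'b) monoid_scheme \<Rightarrow> 'a set \<Rightarrow> 'a set \<Rightarrow> ('a \<times> 'a \<Rightarrow> 'c) \<Rightarrow> bool" where
  "inv2 G S V f \<longleftrightarrow> (\<forall>a\<in>S. \<forall>b\<in>S. \<forall>v\<in>V. \<forall>w\<in>V.
           a \<otimes>\<^bsub>G\<^esub> v \<in> S \<longrightarrow> b \<otimes>\<^bsub>G\<^esub> w \<in> S \<longrightarrow> f (a \<otimes>\<^bsub>G\<^esub> v, b \<otimes>\<^bsub>G\<^esub> w) = f (a, b))"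

lemma inv1_mono: "inv1 G S V d \<Longrightarrow> V' \<subseteq> V \<Longrightarrow> inv1 G S V' d"
  unfolding inv1_def by (meson subsetD)
lemma inv2_mono: "inv2 G S V d \<Longrightarrow> V' \<subseteq> V \<Longrightarrow> inv2 G S V' d"
  unfolding inv2_def by (meson subsetD)

context group
begin

lemma rep_prop:
  assumes V: "subgroup V G" and S: "S \<subseteq> carrier G" and h: "h \<in> S" and v: "v \<in> V"
  shows "rep G S V (h \<otimes> v) \<in> S \<and> (\<exists>w\<in>V. h = rep G S V (h \<otimes> v) \<otimes> w)"
proof -
  let ?x = "h \<otimes> v"
  have "\<exists>h'. h' \<in> S \<and> (\<exists>v'\<in>V. ?x = h' \<otimes> v')" using h v by blast
  then have r: "rep G S V ?x \<in> S \<and> (\<exists>v'\<in>V. ?x = rep G S V ?x \<otimes> v')"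
    unfolding rep_def by (rule someI_ex)
  then obtain v' where v': "v' \<in> V" "?x = rep G S V ?x \<otimes> v'" by auto
  define r where "r = rep G S V ?x"
  have rS: "r \<in> S" using r unfolding r_def by simp
  have e: "h \<otimes> v = r \<otimes> v'" using v'(2) unfolding r_def by simp
  have hc: "h \<in> carrier G" using h S by auto
  have rc: "r \<in> carrier G" using rS S by auto
  have vc: "v \<in> carrier G" "v' \<in> carrier G" using subgroup.mem_carrier[OF V] v v'(1) by auto
  have "h = h \<otimes> v \<otimes> inv v" using hc vc by (simp add: m_assoc)
  also have "\<dots> = r \<otimes> (v' \<otimes> inv v)" using e rc vc by (simp add: m_assoc)
  finally have "h = r \<otimes> (v' \<otimes> inv v)" .
  moreover have "v' \<otimes> inv v \<in> V" using subgroup.m_closed[OF V v'(1) subgroup.m_inv_closed[OF V v]] .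
  ultimately show ?thesis using rS unfolding r_def by blast
qed

lemma ext_eq1:
  assumes V: "subgroup V G" and S: "S \<subseteq> carrier G" and d: "inv1 G S V d" and h: "h \<in> S" and v: "v \<in> V"
  shows "d (rep G S V (h \<otimes> v)) = d h"
proof -
  obtain w where w: "w \<in> V" "h = rep G S V (h \<otimes> v) \<otimes> w" and r: "rep G S V (h \<otimes> v) \<in> S"
    using rep_prop[OF V S h v] by auto
  define r where "r = rep G S V (h \<otimes> v)"
  have rS: "r \<in> S" using r unfolding r_def .
  have hr: "h = r \<otimes> w" using w(2) unfolding r_def .
  have "r \<otimes> w \<in> S \<longrightarrow> d (r \<otimes> w) = d r" using d rS w(1) unfolding inv1_def by blast
  then have "d (r \<otimes> w) = d r" using h hr by simp
  then show ?thesis using hr unfolding r_def[symmetric] by simp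
qed

lemma ext_eq1':
  assumes V: "subgroup V G" and S: "S \<subseteq> carrier G" and d: "inv1 G S V d" and h: "h \<in> S"
  shows "d (rep G S V h) = d h"
proof -
  have "h \<in> carrier G" using h S by auto
  then show ?thesis using ext_eq1[OF V S d h subgroup.one_closed[OF V]] by simp
qed

lemma ext_eq2:
  assumes V: "subgroup V G" and S: "S \<subseteq> carrier G" and f: "inv2 G S V f"
    and h: "h \<in> S" "h' \<in> S" and v: "v \<in> V" "v' \<in> V"
  shows "f (rep G S V (h \<otimes> v), rep G S V (h' \<otimes> v')) = f (h, h')"
proof -
  obtain w where w: "w \<in> V" "h = rep G S V (h \<otimes> v) \<otimes> w" and r: "rep G S V (h \<otimes> v) \<in> S"
    using rep_prop[OF V S h(1) v(1)] by auto
  obtain w' where w': "w' \<in> V" "h' = rep G S V (h' \<otimes> v') \<otimes> w'" and r': "rep G S V (h' \<otimes> v') \<in> S"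
    using rep_prop[OF V S h(2) v(2)] by auto
  define r where "r = rep G S V (h \<otimes> v)"
  define r' where "r' = rep G S V (h' \<otimes> v')"
  have rS: "r \<in> S" "r' \<in> S" using r r' unfolding r_def r'_def by auto
  have hr: "h = r \<otimes> w" "h' = r' \<otimes> w'" using w(2) w'(2) unfolding r_def r'_def by auto
  have "r \<otimes> w \<in> S \<longrightarrow> r' \<otimes> w' \<in> S \<longrightarrow> f (r \<otimes> w, r' \<otimes> w') = f (r, r')"
    using f rS w(1) w'(1) unfolding inv2_def by blast
  then have "f (r \<otimes> w, r' \<otimes> w') = f (r, r')" using h hr by simp
  then show ?thesis using hr unfolding r_def[symmetric] r'_def[symmetric] by simp
qed

lemma ext_eq2':
  assumes V: "subgroup V G" and S: "S \<subseteq> carrier G" and f: "inv2 G S V f"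
    and h: "h \<in> S" "h' \<in> S"
  shows "f (rep G S V h, rep G S V h') = f (h, h')"
proof -
  have "h \<in> carrier G" "h' \<in> carrier G" using h S by auto
  then show ?thesis using ext_eq2[OF V S f h subgroup.one_closed[OF V] subgroup.one_closed[OF V]] by simp
qed

lemma set_mult_iff: "x \<in> H <#> V \<longleftrightarrow> (\<exists>h\<in>H. \<exists>v\<in>V. x = h \<otimes> v)"
  unfolding set_mult_def by auto

lemma normal_conj: "V \<lhd> G \<Longrightarrow> v \<in> V \<Longrightarrow> g \<in> carrier G \<Longrightarrow> inv g \<otimes> v \<otimes> g \<in> V"
  using normal_invE(2)[of V "inv g" v] by simp

lemma prod_decomp:
  assumes V: "V \<lhd> G" and Hc: "H \<subseteq> carrier G" and h: "h1 \<in> H" "h2 \<in> H" and v: "v1 \<in> V" "v2 \<in> V"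
  shows "(h1 \<otimes> v1) \<otimes> (h2 \<otimes> v2) = (h1 \<otimes> h2) \<otimes> ((inv h2 \<otimes> v1 \<otimes> h2) \<otimes> v2)
         \<and> (inv h2 \<otimes> v1 \<otimes> h2) \<otimes> v2 \<in> V"
proof
  have sV: "subgroup V G" using V by (rule normal_invE(1))
  have hc: "h1 \<in> carrier G" "h2 \<in> carrier G" using h Hc by auto
  have vc: "v1 \<in> carrier G" "v2 \<in> carrier G" using subgroup.mem_carrier[OF sV] v by auto
  show "(h1 \<otimes> v1) \<otimes> (h2 \<otimes> v2) = (h1 \<otimes> h2) \<otimes> ((inv h2 \<otimes> v1 \<otimes> h2) \<otimes> v2)"
    using hc vc by (simp add: m_assoc)
  show "(inv h2 \<otimes> v1 \<otimes> h2) \<otimes> v2 \<in> V"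
    using subgroup.m_closed[OF sV normal_conj[OF V v(1) hc(2)] v(2)] .
qed

lemma setmult_subgroup:
  assumes H: "subgroup H G" and V: "V \<lhd> G"
  shows "subgroup (H <#> V) G"
proof (rule subgroupI)
  have sV: "subgroup V G" using V by (rule normal_invE(1))
  have Hc: "H \<subseteq> carrier G" using H by (rule subgroup.subset)
  show "H <#> V \<subseteq> carrier G"
    unfolding set_mult_def using Hc subgroup.mem_carrier[OF sV] by auto
  have "\<one> \<otimes> \<one> \<in> H <#> V" unfolding set_mult_iff using subgroup.one_closed[OF H] subgroup.one_closed[OF sV] by blast
  then show "H <#> V \<noteq> {}" by auto
  fix a b assume a: "a \<in> H <#> V" and b: "b \<in> H <#> V"
  obtain h1 v1 where a1: "h1 \<in> H" "v1 \<in> V" "a = h1 \<otimes> v1" using a unfolding set_mult_iff by auto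
  obtain h2 v2 where b1: "h2 \<in> H" "v2 \<in> V" "b = h2 \<otimes> v2" using b unfolding set_mult_iff by auto
  have hc: "h1 \<in> carrier G" using a1 Hc by auto
  have vc: "v1 \<in> carrier G" using subgroup.mem_carrier[OF sV] a1 by auto
  have "inv a = inv h1 \<otimes> (h1 \<otimes> inv v1 \<otimes> inv h1)" using a1(3) hc vc by (simp add: inv_mult_group m_assoc)
  moreover have "h1 \<otimes> inv v1 \<otimes> inv h1 \<in> V"
    using normal_invE(2)[OF V hc subgroup.m_inv_closed[OF sV a1(2)]] .
  moreover have "inv h1 \<in> H" using subgroup.m_inv_closed[OF H a1(1)] .
  ultimately show "inv a \<in> H <#> V" unfolding set_mult_iff by blast
  have "a \<otimes> b = (h1 \<otimes> h2) \<otimes> ((inv h2 \<otimes> v1 \<otimes> h2) \<otimes> v2) \<and> (inv h2 \<otimes> v1 \<otimes> h2) \<otimes> v2 \<in> V"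
    using prod_decomp[OF V Hc a1(1) b1(1) a1(2) b1(2)] a1(3) b1(3) by simp
  moreover have "h1 \<otimes> h2 \<in> H" using subgroup.m_closed[OF H a1(1) b1(1)] .
  ultimately show "a \<otimes> b \<in> H <#> V" unfolding set_mult_iff by blast
qed

lemma setmult_open:
  assumes tg: "topological_group G T" and Hc: "H \<subseteq> carrier G" and V: "openin T V"
  shows "openin T (H <#> V)"
proof -
  have "H <#> V = \<Union>((\<lambda>h. h <# V) ` H)" unfolding set_mult_def l_coset_def by auto
  moreover have "openin T (h <# V)" if "h \<in> H" for h using tg V by (rule openin_lcoset) (use that Hc in auto)
  ultimately show ?thesis by auto
qed

end

definition cont1 :: "'a topology \<Rightarrow> 'a set \<Rightarrow> ('a \<Rightarrow> 'p::prime_card mod_ring) \<Rightarrow> bool" where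
  "cont1 T S d \<longleftrightarrow> continuous_map (subtopology T S) (discrete_topology UNIV) d"

definition cont2 :: "'a topology \<Rightarrow> 'a set \<Rightarrow> ('a \<times> 'a \<Rightarrow> 'p::prime_card mod_ring) \<Rightarrow> bool" where
  "cont2 T S f \<longleftrightarrow> continuous_map (prod_topology (subtopology T S) (subtopology T S)) (discrete_topology UNIV) f"

definition isB2 :: "('a,'b) monoid_scheme \<Rightarrow> 'a topology \<Rightarrow> 'a set \<Rightarrow> ('a \<times> 'a \<Rightarrow> 'p::prime_card mod_ring) \<Rightarrow> bool" where
  "isB2 G T S f \<longleftrightarrow> (\<exists>\<phi>. cont1 T S \<phi> \<and> (\<forall>g\<in>S. \<forall>h\<in>S. f (g, h) = \<phi> h - \<phi> (g \<otimes>\<^bsub>G\<^esub> h) + \<phi> g))"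

definition cocyc :: "('a,'b) monoid_scheme \<Rightarrow> 'a set \<Rightarrow> ('a \<times> 'a \<Rightarrow> 'p::prime_card mod_ring) \<Rightarrow> bool" where
  "cocyc G S f \<longleftrightarrow> (\<forall>g\<in>S. \<forall>h\<in>S. \<forall>k\<in>S.
         f (h, k) - f (g \<otimes>\<^bsub>G\<^esub> h, k) + f (g, h \<otimes>\<^bsub>G\<^esub> k) - f (g, h) = 0)"

lemma cont1_mono: "cont1 T U d \<Longrightarrow> S \<subseteq> U \<Longrightarrow> cont1 T S d"
  unfolding cont1_def by (rule continuous_map_from_subtopology_mono)

lemma cont2_mono: "cont2 T U f \<Longrightarrow> S \<subseteq> U \<Longrightarrow> cont2 T S f"
proof -
  assume c: "cont2 T U f" and SU: "S \<subseteq> U"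
  have "continuous_map (subtopology (prod_topology (subtopology T U) (subtopology T U)) (S \<times> S)) (discrete_topology UNIV) f"
    using c unfolding cont2_def by (rule continuous_map_from_subtopology)
  moreover have "subtopology (prod_topology (subtopology T U) (subtopology T U)) (S \<times> S) = prod_topology (subtopology T S) (subtopology T S)"
  proof -
    have e: "(U \<times> U) \<inter> (S \<times> S) = S \<times> S" using SU by auto
    show ?thesis by (simp add: subtopology_Times[symmetric] subtopology_subtopology e)
  qed
  ultimately show ?thesis unfolding cont2_def by simp
qed

lemma isB2_mono:
  assumes "isB2 G T U f" "S \<subseteq> U" shows "isB2 G T S f"
proof -
  obtain \<phi> where p: "cont1 T U \<phi>" "\<forall>g\<in>U. \<forall>h\<in>U. f (g, h) = \<phi> h - \<phi> (g \<otimes>\<^bsub>G\<^esub> h) + \<phi> g"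
    using assms(1) unfolding isB2_def by blast
  have "cont1 T S \<phi>" using p(1) assms(2) by (rule cont1_mono)
  moreover have "\<forall>g\<in>S. \<forall>h\<in>S. f (g, h) = \<phi> h - \<phi> (g \<otimes>\<^bsub>G\<^esub> h) + \<phi> g"
    using p(2) assms(2) by (meson subsetD)
  ultimately show ?thesis unfolding isB2_def by blast
qed

context group
begin

lemma ext_hom:
  assumes S: "subgroup S G" and V: "V \<lhd> G" and d: "homF G S d" "inv1 G S V d"
  shows "homF G (S <#> V) (\<lambda>x. d (rep G S V x))"
  unfolding homF_def
proof (intro ballI)
  fix x y assume x: "x \<in> S <#> V" and y: "y \<in> S <#> V"
  have sV: "subgroup V G" using V by (rule normal_invE(1))
  have Sc: "S \<subseteq> carrier G" using S by (rule subgroup.subset)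
  obtain h1 v1 where a1: "h1 \<in> S" "v1 \<in> V" "x = h1 \<otimes> v1" using x unfolding set_mult_iff by auto
  obtain h2 v2 where b1: "h2 \<in> S" "v2 \<in> V" "y = h2 \<otimes> v2" using y unfolding set_mult_iff by auto
  obtain w where w: "x \<otimes> y = (h1 \<otimes> h2) \<otimes> w" "w \<in> V"
    using prod_decomp[OF V Sc a1(1) b1(1) a1(2) b1(2)] a1(3) b1(3) by auto
  have hh: "h1 \<otimes> h2 \<in> S" using subgroup.m_closed[OF S a1(1) b1(1)] .
  have "d (rep G S V (x \<otimes> y)) = d (h1 \<otimes> h2)" unfolding w(1) using ext_eq1[OF sV Sc d(2) hh w(2)] .
  also have "\<dots> = d h1 + d h2" using homF_D[OF d(1) a1(1) b1(1)] .
  also have "\<dots> = d (rep G S V x) + d (rep G S V y)"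
    using ext_eq1[OF sV Sc d(2) a1(1) a1(2)] ext_eq1[OF sV Sc d(2) b1(1) b1(2)] a1(3) b1(3) by simp
  finally show "d (rep G S V (x \<otimes> y)) = d (rep G S V x) + d (rep G S V y)" .
qed

lemma setmult_right:
  assumes V: "subgroup V G" and x: "x \<in> S <#> V" and w: "w \<in> V" and Sc: "S \<subseteq> carrier G"
  shows "\<exists>h\<in>S. \<exists>v\<in>V. x = h \<otimes> v \<and> x \<otimes> w = h \<otimes> (v \<otimes> w) \<and> v \<otimes> w \<in> V"
proof -
  obtain h v where a: "h \<in> S" "v \<in> V" "x = h \<otimes> v" using x unfolding set_mult_iff by auto
  have "h \<in> carrier G" "v \<in> carrier G" "w \<in> carrier G" using a Sc subgroup.mem_carrier[OF V] w by auto
  then have "x \<otimes> w = h \<otimes> (v \<otimes> w)" using a(3) by (simp add: m_assoc)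
  moreover have "v \<otimes> w \<in> V" using subgroup.m_closed[OF V a(2) w] .
  ultimately show ?thesis using a by blast
qed

lemma setmult_carrier:
  assumes V: "subgroup V G" and Sc: "S \<subseteq> carrier G"
  shows "S <#> V \<subseteq> carrier G"
  unfolding set_mult_def using Sc subgroup.mem_carrier[OF V] by auto

lemma ext_cont1:
  assumes tg: "topological_group G T" and V: "subgroup V G" "openin T V" and Sc: "S \<subseteq> carrier G"
    and d: "inv1 G S V d"
  shows "cont1 T (S <#> V) (\<lambda>x. d (rep G S V x))"
  unfolding cont1_def
proof (rule inv_cont1[OF tg V setmult_carrier[OF V(1) Sc]])
  fix x w assume x: "x \<in> S <#> V" and w: "w \<in> V"
  obtain h v where a: "h \<in> S" "v \<in> V" "x = h \<otimes> v" "x \<otimes> w = h \<otimes> (v \<otimes> w)" "v \<otimes> w \<in> V"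
    using setmult_right[OF V(1) x w Sc] by blast
  have "x \<otimes> w \<in> S <#> V" unfolding set_mult_iff using a(1,4,5) by blast
  moreover have "d (rep G S V (x \<otimes> w)) = d (rep G S V x)"
    using ext_eq1[OF V(1) Sc d a(1) a(2)] ext_eq1[OF V(1) Sc d a(1) a(5)] a(3) a(4) by simp
  ultimately show "x \<otimes> w \<in> S <#> V \<and> d (rep G S V (x \<otimes> w)) = d (rep G S V x)" by simp
qed

lemma ext_cont2:
  assumes tg: "topological_group G T" and V: "subgroup V G" "openin T V" and Sc: "S \<subseteq> carrier G"
    and f: "inv2 G S V f"
  shows "cont2 T (S <#> V) (\<lambda>(x,y). f (rep G S V x, rep G S V y))"
  unfolding cont2_def
proof (rule inv_cont2[OF tg V setmult_carrier[OF V(1) Sc]])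
  fix x w assume x: "x \<in> S <#> V" and w: "w \<in> V"
  obtain h v where a: "h \<in> S" "v \<in> V" "x = h \<otimes> v" "x \<otimes> w = h \<otimes> (v \<otimes> w)" "v \<otimes> w \<in> V"
    using setmult_right[OF V(1) x w Sc] by blast
  show "x \<otimes> w \<in> S <#> V" unfolding set_mult_iff using a(1,4,5) by blast
next
  fix x y w w' assume x: "x \<in> S <#> V" and y: "y \<in> S <#> V" and w: "w \<in> V" "w' \<in> V"
  obtain h v where a: "h \<in> S" "v \<in> V" "x = h \<otimes> v" "x \<otimes> w = h \<otimes> (v \<otimes> w)" "v \<otimes> w \<in> V"
    using setmult_right[OF V(1) x w(1) Sc] by blast
  obtain h' v' where b: "h' \<in> S" "v' \<in> V" "y = h' \<otimes> v'" "y \<otimes> w' = h' \<otimes> (v' \<otimes> w')" "v' \<otimes> w' \<in> V"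
    using setmult_right[OF V(1) y w(2) Sc] by blast
  show "(\<lambda>(x,y). f (rep G S V x, rep G S V y)) (x \<otimes> w, y \<otimes> w') = (\<lambda>(x,y). f (rep G S V x, rep G S V y)) (x, y)"
    using ext_eq2[OF V(1) Sc f a(1) b(1) a(2) b(2)] ext_eq2[OF V(1) Sc f a(1) b(1) a(5) b(5)] a(3,4) b(3,4) by simp
qed

end

lemma H1_sub: "H1 (G\<lparr>carrier := S\<rparr>) (subtopology T S) = {d. cont1 T S d \<and> homF G S d}"
  unfolding H1_def cochain1_def cont1_def homF_def by simp

lemma kerF_sub: "kerF (G\<lparr>carrier := S\<rparr>) \<kappa> = kerS S \<kappa>"
  unfolding kerF_def kerS_def by simp

lemma B2_sub: "B2 (G\<lparr>carrier := S\<rparr>) (subtopology T S) = {f. isB2 G T S f}"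
  unfolding B2_def isB2_def cochain1_def cont1_def by simp

lemma Z2_sub: "Z2 (G\<lparr>carrier := S\<rparr>) (subtopology T S) = {f. cont2 T S f \<and> cocyc G S f}"
  unfolding Z2_def cocyc_def cochain2_def cont2_def by simp

lemma subtop_ker: "subtopology (subtopology T S) (kerS S \<kappa>) = subtopology T (kerS S \<kappa>)"
proof -
  have "S \<inter> kerS S \<kappa> = kerS S \<kappa>" unfolding kerS_def by auto
  then show ?thesis by (simp add: subtopology_subtopology)
qed

lemma homF_upd [simp]: "homF (G\<lparr>carrier := S\<rparr>) A f = homF G A f"
  unfolding homF_def by simp

lemma cont1_ker: "cont1 (subtopology T S) (kerS S \<kappa>) \<phi> = cont1 T (kerS S \<kappa>) \<phi>"
  unfolding cont1_def subtop_ker ..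

lemma isB2_ker: "isB2 (G\<lparr>carrier := S\<rparr>) (subtopology T S) (kerS S \<kappa>) f = isB2 G T (kerS S \<kappa>) f"
  unfolding isB2_def cont1_ker by simp

definition C1 where "C1 G T S \<kappa> \<longleftrightarrow> (\<forall>\<phi>. cont1 T (kerS S \<kappa>) \<phi> \<and> homF G (kerS S \<kappa>) \<phi> \<longrightarrow>
     isB2 G T S (cup11 \<kappa> (cor1 (G\<lparr>carrier := S\<rparr>) (kerS S \<kappa>) \<phi>)))"
definition C2 where "C2 G T S \<kappa> \<longleftrightarrow> (\<forall>\<psi>. cont1 T S \<psi> \<and> homF G S \<psi> \<longrightarrow> isB2 G T S (cup11 \<kappa> \<psi>) \<longrightarrow>
     (\<exists>\<phi>. cont1 T (kerS S \<kappa>) \<phi> \<and> homF G (kerS S \<kappa>) \<phi> \<and>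
        (\<forall>g\<in>S. \<psi> g = cor1 (G\<lparr>carrier := S\<rparr>) (kerS S \<kappa>) \<phi> g)))"
definition C3 where "C3 G T S \<kappa> \<longleftrightarrow> (\<forall>\<psi>. cont1 T S \<psi> \<and> homF G S \<psi> \<longrightarrow> isB2 G T (kerS S \<kappa>) (cup11 \<kappa> \<psi>))"
definition C4 where "C4 G T S \<kappa> \<longleftrightarrow> (\<forall>f. cont2 T S f \<and> cocyc G S f \<longrightarrow> isB2 G T (kerS S \<kappa>) f \<longrightarrow>
     (\<exists>\<psi>. cont1 T S \<psi> \<and> homF G S \<psi> \<and> isB2 G T S (\<lambda>x. f x - cup11 \<kappa> \<psi> x)))"

lemma cup_exact_iff:
  "cup_exact (G\<lparr>carrier := S\<rparr>) (subtopology T S) TYPE('p::prime_card) \<longleftrightarrow>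
   (\<forall>\<kappa> :: 'a \<Rightarrow> 'p mod_ring. cont1 T S \<kappa> \<and> homF G S \<kappa> \<longrightarrow> C1 G T S \<kappa> \<and> C2 G T S \<kappa> \<and> C3 G T S \<kappa> \<and> C4 G T S \<kappa>)"
  unfolding cup_exact_def Let_def H1_sub kerF_sub B2_sub Z2_sub cohomologous2_def
  by (simp add: subtop_ker H1_sub B2_sub C1_def C2_def C3_def C4_def cont1_ker isB2_ker)

context group
begin

lemma normal_below3:
  assumes pg: "profinite_group G T"
    and V1: "subgroup V1 G" "openin T V1" and V2: "subgroup V2 G" "openin T V2"
    and V3: "subgroup V3 G" "openin T V3"
  shows "\<exists>W. W \<lhd> G \<and> openin T W \<and> W \<subseteq> V1 \<and> W \<subseteq> V2 \<and> W \<subseteq> V3"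
proof -
  have s: "subgroup (V1 \<inter> V2 \<inter> V3) G" using subgroups_Inter_pair[OF subgroups_Inter_pair[OF V1(1) V2(1)] V3(1)] .
  have o: "openin T (V1 \<inter> V2 \<inter> V3)" using V1(2) V2(2) V3(2) by auto
  obtain W where "W \<lhd> G" "openin T W" "W \<subseteq> V1 \<inter> V2 \<inter> V3" using normal_core[OF pg s o] by auto
  then show ?thesis by auto
qed

lemma ker_closed:
  assumes H: "closedin T H" and k: "cont1 T H \<kappa>"
  shows "closedin T (kerS H \<kappa>)"
proof -
  have "closedin (subtopology T H) {x \<in> topspace (subtopology T H). \<kappa> x \<in> {0}}"
    using k unfolding cont1_def by (rule closedin_continuous_map_preimage) simp
  moreover have "{x \<in> topspace (subtopology T H). \<kappa> x \<in> {0}} = kerS H \<kappa>"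
    using closedin_subset[OF H] unfolding kerS_def by auto
  ultimately show ?thesis using H by (metis closedin_trans_full)
qed

lemma lift_sub:
  assumes H: "subgroup H G" and V: "V \<lhd> G"
  shows "H \<subseteq> H <#> V"
proof
  fix h assume h: "h \<in> H"
  have sV: "subgroup V G" using V by (rule normal_invE(1))
  have "h = h \<otimes> \<one>" using subgroup.mem_carrier[OF H h] by simp
  then show "h \<in> H <#> V" unfolding set_mult_iff using h subgroup.one_closed[OF sV] by blast
qed

lemma lift_ker:
  assumes H: "subgroup H G" and V: "V \<lhd> G" and k: "inv1 G H V \<kappa>"
  shows "kerS (H <#> V) (\<lambda>x. \<kappa> (rep G H V x)) = kerS H \<kappa> <#> V"
proof -
  have sV: "subgroup V G" using V by (rule normal_invE(1))
  have Hc: "H \<subseteq> carrier G" using H by (rule subgroup.subset)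
  show ?thesis
  proof
    show "kerS (H <#> V) (\<lambda>x. \<kappa> (rep G H V x)) \<subseteq> kerS H \<kappa> <#> V"
    proof
      fix x assume x: "x \<in> kerS (H <#> V) (\<lambda>x. \<kappa> (rep G H V x))"
      then obtain h v where a: "h \<in> H" "v \<in> V" "x = h \<otimes> v" unfolding kerS_def set_mult_iff by auto
      have "\<kappa> (rep G H V x) = 0" using x unfolding kerS_def by simp
      then have "\<kappa> h = 0" using ext_eq1[OF sV Hc k a(1) a(2)] a(3) by simp
      then have "h \<in> kerS H \<kappa>" using a(1) unfolding kerS_def by simp
      then show "x \<in> kerS H \<kappa> <#> V" unfolding set_mult_iff using a(2,3) by blast
    qed
    show "kerS H \<kappa> <#> V \<subseteq> kerS (H <#> V) (\<lambda>x. \<kappa> (rep G H V x))"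
    proof
      fix x assume "x \<in> kerS H \<kappa> <#> V"
      then obtain n v where a: "n \<in> H" "\<kappa> n = 0" "v \<in> V" "x = n \<otimes> v" unfolding kerS_def set_mult_iff by auto
      have "x \<in> H <#> V" unfolding set_mult_iff using a by blast
      moreover have "\<kappa> (rep G H V x) = 0" using ext_eq1[OF sV Hc k a(1) a(3)] a by simp
      ultimately show "x \<in> kerS (H <#> V) (\<lambda>x. \<kappa> (rep G H V x))" unfolding kerS_def by simp
    qed
  qed
qed

lemma formula_term_in_ker:
  fixes f :: "'a \<Rightarrow> 'p::prime_card mod_ring"
  assumes S: "subgroup S G" and hf: "homF G S f" and tS: "t \<in> S" and ft: "f t = 1" and g: "g \<in> S"
  shows "t [^] i \<otimes> g \<otimes> inv (t [^] idx (of_nat i + f g)) \<in> kerS S f"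
proof -
  have tp: "t [^] (n::nat) \<in> S" for n using S tS by (rule sub_pow)
  have ftp: "f (t [^] (n::nat)) = of_nat n" for n using homF_pow[OF S hf tS, of n] ft by simp
  have "t [^] i \<otimes> g \<otimes> inv (t [^] idx (of_nat i + f g)) \<in> S"
    using S tp g by (simp add: subgroup.m_closed subgroup.m_inv_closed)
  moreover have "f (t [^] i \<otimes> g \<otimes> inv (t [^] idx (of_nat i + f g))) = 0"
    using homF_3[OF S hf tp g tp] ftp by simp
  ultimately show ?thesis unfolding kerS_def by simp
qed

lemma cor_compat:
  fixes \<kappa> \<kappa>U :: "'a \<Rightarrow> 'p::prime_card mod_ring"
  assumes H: "subgroup H G" and U: "subgroup U G" and HU: "H \<subseteq> U"
    and kU: "homF G U \<kappa>U" and k: "homF G H \<kappa>" and agree: "\<And>h. h \<in> H \<Longrightarrow> \<kappa>U h = \<kappa> h"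
    and triv: "(\<forall>h\<in>H. \<kappa> h = 0) \<Longrightarrow> (\<forall>u\<in>U. \<kappa>U u = 0)"
    and phi: "homF G (kerS U \<kappa>U) \<phi>" and phi2: "homF G (kerS H \<kappa>) \<phi>2"
    and eqp: "\<And>n. n \<in> kerS H \<kappa> \<Longrightarrow> \<phi> n = \<phi>2 n"
    and g: "g \<in> H"
  shows "cor1 (G\<lparr>carrier := U\<rparr>) (kerS U \<kappa>U) \<phi> g = cor1 (G\<lparr>carrier := H\<rparr>) (kerS H \<kappa>) \<phi>2 g"
proof (cases "\<forall>h\<in>H. \<kappa> h = 0")
  case True
  have kH: "kerS H \<kappa> = H" using True unfolding kerS_def by auto
  have kU': "kerS U \<kappa>U = U" using triv[OF True] unfolding kerS_def by auto
  have gU: "g \<in> U" using g HU by auto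
  have "cor1 (G\<lparr>carrier := U\<rparr>) (kerS U \<kappa>U) \<phi> g = \<phi> g"
    unfolding kU' using U phi[unfolded kU'] gU by (rule cor_trivial)
  moreover have "cor1 (G\<lparr>carrier := H\<rparr>) (kerS H \<kappa>) \<phi>2 g = \<phi>2 g"
    unfolding kH using H phi2[unfolded kH] g by (rule cor_trivial)
  moreover have "\<phi> g = \<phi>2 g" using eqp g kH by simp
  ultimately show ?thesis by simp
next
  case False
  then obtain t where t: "t \<in> H" "\<kappa> t \<noteq> 0" by auto
  define t1 where "t1 = t [^] idx (inverse (\<kappa> t))"
  have t1H: "t1 \<in> H" unfolding t1_def using H t(1) by (rule sub_pow)
  have kt1: "\<kappa> t1 = 1" unfolding t1_def using homF_pow[OF H k t(1)] t(2) by simp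
  have kUt1: "\<kappa>U t1 = 1" using agree[OF t1H] kt1 by simp
  have gU: "g \<in> U" using g HU by auto
  have sub: "kerS H \<kappa> \<subseteq> kerS U \<kappa>U" using HU agree unfolding kerS_def by auto
  have "cor1 (G\<lparr>carrier := U\<rparr>) (kerS U \<kappa>U) \<phi> g =
     (\<Sum>i<CARD('p). \<phi> (t1 [^] i \<otimes> g \<otimes> inv (t1 [^] idx (of_nat i + \<kappa>U g))))"
    using U kU _ kUt1 phi gU by (rule cor_formula) (use t1H HU in auto)
  also have "\<dots> = (\<Sum>i<CARD('p). \<phi>2 (t1 [^] i \<otimes> g \<otimes> inv (t1 [^] idx (of_nat i + \<kappa> g))))"
  proof (rule sum.cong)
    fix i assume "i \<in> {..<CARD('p)}"
    have "t1 [^] i \<otimes> g \<otimes> inv (t1 [^] idx (of_nat i + \<kappa> g)) \<in> kerS H \<kappa>"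
      using H k t1H kt1 g by (rule formula_term_in_ker)
    then show "\<phi> (t1 [^] i \<otimes> g \<otimes> inv (t1 [^] idx (of_nat i + \<kappa>U g))) =
               \<phi>2 (t1 [^] i \<otimes> g \<otimes> inv (t1 [^] idx (of_nat i + \<kappa> g)))"
      using eqp agree[OF g] by simp
  qed simp
  also have "\<dots> = cor1 (G\<lparr>carrier := H\<rparr>) (kerS H \<kappa>) \<phi>2 g"
    using H k t1H kt1 phi2 g by (rule cor_formula[symmetric])
  finally show ?thesis .
qed

end

lemma isB2_cong:
  assumes "isB2 G T S f" "\<And>g h. g \<in> S \<Longrightarrow> h \<in> S \<Longrightarrow> f (g, h) = f' (g, h)"
  shows "isB2 G T S f'"
  using assms unfolding isB2_def by metis

lemma C3_all:
  fixes \<kappa> :: "'a \<Rightarrow> 'p::prime_card mod_ring"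
  shows "C3 G T S \<kappa>"
  unfolding C3_def
proof (intro allI impI)
  fix \<psi> :: "'a \<Rightarrow> 'p mod_ring"
  have "cont1 T (kerS S \<kappa>) (\<lambda>_. 0)" unfolding cont1_def by simp
  moreover have "\<forall>g\<in>kerS S \<kappa>. \<forall>h\<in>kerS S \<kappa>. cup11 \<kappa> \<psi> (g, h) = (\<lambda>_. 0) h - (\<lambda>_. 0) (g \<otimes>\<^bsub>G\<^esub> h) + (\<lambda>_. 0) g"
    unfolding cup11_def kerS_def by simp
  ultimately show "isB2 G T (kerS S \<kappa>) (cup11 \<kappa> \<psi>)" unfolding isB2_def by blast
qed

context group
begin

lemma decomp2:
  assumes V: "V \<lhd> G" and Hc: "H \<subseteq> carrier G" and x: "x \<in> H <#> V" and y: "y \<in> H <#> V"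
  obtains h1 h2 v1 v2 w where "h1 \<in> H" "h2 \<in> H" "v1 \<in> V" "v2 \<in> V" "w \<in> V"
    "x = h1 \<otimes> v1" "y = h2 \<otimes> v2" "x \<otimes> y = (h1 \<otimes> h2) \<otimes> w"
proof -
  obtain h1 v1 where a1: "h1 \<in> H" "v1 \<in> V" "x = h1 \<otimes> v1" using x unfolding set_mult_iff by auto
  obtain h2 v2 where b1: "h2 \<in> H" "v2 \<in> V" "y = h2 \<otimes> v2" using y unfolding set_mult_iff by auto
  obtain w where w: "x \<otimes> y = (h1 \<otimes> h2) \<otimes> w" "w \<in> V"
    using prod_decomp[OF V Hc a1(1) b1(1) a1(2) b1(2)] a1(3) b1(3) by auto
  show ?thesis using that a1 b1 w by blast
qed

lemma lift_all:
  fixes \<kappa> :: "'a \<Rightarrow> 'p::prime_card mod_ring"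
  assumes pg: "profinite_group G T" and H: "subgroup H G"
    and kh: "homF G H \<kappa>" and W: "W \<lhd> G" "openin T W" and ki: "inv1 G H W \<kappa>"
  shows "subgroup (H <#> W) G" "openin T (H <#> W)" "H \<subseteq> H <#> W"
    "cont1 T (H <#> W) (\<lambda>x. \<kappa> (rep G H W x))" "homF G (H <#> W) (\<lambda>x. \<kappa> (rep G H W x))"
    "\<And>h. h \<in> H \<Longrightarrow> \<kappa> (rep G H W h) = \<kappa> h"
    "(\<forall>h\<in>H. \<kappa> h = 0) \<Longrightarrow> (\<forall>u\<in>H <#> W. \<kappa> (rep G H W u) = 0)"
    "kerS (H <#> W) (\<lambda>x. \<kappa> (rep G H W x)) = kerS H \<kappa> <#> W"
proof -
  have tg: "topological_group G T" using pg unfolding profinite_group_def by auto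
  have sW: "subgroup W G" using W(1) by (rule normal_invE(1))
  have Hc: "H \<subseteq> carrier G" using H by (rule subgroup.subset)
  show "subgroup (H <#> W) G" using H W(1) by (rule setmult_subgroup)
  show "openin T (H <#> W)" using tg Hc W(2) by (rule setmult_open)
  show "H \<subseteq> H <#> W" using H W(1) by (rule lift_sub)
  show "cont1 T (H <#> W) (\<lambda>x. \<kappa> (rep G H W x))" using tg sW W(2) Hc ki by (rule ext_cont1)
  show "homF G (H <#> W) (\<lambda>x. \<kappa> (rep G H W x))" using H W(1) kh ki by (rule ext_hom)
  show "\<And>h. h \<in> H \<Longrightarrow> \<kappa> (rep G H W h) = \<kappa> h" using sW Hc ki by (rule ext_eq1')
  show "kerS (H <#> W) (\<lambda>x. \<kappa> (rep G H W x)) = kerS H \<kappa> <#> W" using H W(1) ki by (rule lift_ker)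
  assume z: "\<forall>h\<in>H. \<kappa> h = 0"
  show "\<forall>u\<in>H <#> W. \<kappa> (rep G H W u) = 0"
  proof
    fix u assume "u \<in> H <#> W"
    then obtain h v where a: "h \<in> H" "v \<in> W" "u = h \<otimes> v" unfolding set_mult_iff by auto
    then show "\<kappa> (rep G H W u) = 0" using ext_eq1[OF sW Hc ki a(1) a(2)] z by simp
  qed
qed

end

context group
begin

lemma C2_H:
  fixes \<kappa> :: "'a \<Rightarrow> 'p::prime_card mod_ring"
  assumes pg: "profinite_group G T" and H: "subgroup H G" and Hcl: "closedin T H"
    and kc: "cont1 T H \<kappa>" and kh: "homF G H \<kappa>"
    and hyp: "\<And>U \<kappa>'. subgroup U G \<Longrightarrow> openin T U \<Longrightarrow> cont1 T U \<kappa>' \<Longrightarrow> homF G U \<kappa>' \<Longrightarrow> C2 G T U (\<kappa>' :: 'a \<Rightarrow> 'p mod_ring)"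
  shows "C2 G T H \<kappa>"
  unfolding C2_def
proof (intro allI impI)
  fix \<psi> :: "'a \<Rightarrow> 'p mod_ring"
  assume psi: "cont1 T H \<psi> \<and> homF G H \<psi>" and cb: "isB2 G T H (cup11 \<kappa> \<psi>)"
  obtain \<beta> where beta: "cont1 T H \<beta>" "\<And>g h. g \<in> H \<Longrightarrow> h \<in> H \<Longrightarrow> cup11 \<kappa> \<psi> (g, h) = \<beta> h - \<beta> (g \<otimes> h) + \<beta> g"
    using cb unfolding isB2_def by blast
  have Hc: "H \<subseteq> carrier G" using H by (rule subgroup.subset)
  obtain V1 where V1: "subgroup V1 G" "openin T V1" "inv1 G H V1 \<kappa>"
    using unif1[OF pg Hcl kc[unfolded cont1_def]] unfolding inv1_def by blast
  obtain V2 where V2: "subgroup V2 G" "openin T V2" "inv1 G H V2 \<psi>"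
    using unif1[OF pg Hcl psi[THEN conjunct1, unfolded cont1_def]] unfolding inv1_def by blast
  obtain V3 where V3: "subgroup V3 G" "openin T V3" "inv1 G H V3 \<beta>"
    using unif1[OF pg Hcl beta(1)[unfolded cont1_def]] unfolding inv1_def by blast
  obtain W where W: "W \<lhd> G" "openin T W" "W \<subseteq> V1" "W \<subseteq> V2" "W \<subseteq> V3"
    using normal_below3[OF pg V1(1,2) V2(1,2) V3(1,2)] by blast
  have sW: "subgroup W G" using W(1) by (rule normal_invE(1))
  have tg: "topological_group G T" using pg unfolding profinite_group_def by auto
  have ki: "inv1 G H W \<kappa>" using V1(3) W(3) by (rule inv1_mono)
  have pi: "inv1 G H W \<psi>" using V2(3) W(4) by (rule inv1_mono)
  have bi: "inv1 G H W \<beta>" using V3(3) W(5) by (rule inv1_mono)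
  define U where "U = H <#> W"
  define \<kappa>U where "\<kappa>U = (\<lambda>x. \<kappa> (rep G H W x))"
  define \<psi>U where "\<psi>U = (\<lambda>x. \<psi> (rep G H W x))"
  define \<beta>U where "\<beta>U = (\<lambda>x. \<beta> (rep G H W x))"
  note L = lift_all[OF pg H kh W(1,2) ki, folded U_def \<kappa>U_def]
  have C2U: "C2 G T U \<kappa>U" using hyp[OF L(1,2,4,5)] .
  have psiU: "cont1 T U \<psi>U" "homF G U \<psi>U"
    unfolding U_def \<psi>U_def
    using ext_cont1[OF tg sW W(2) Hc pi] ext_hom[OF H W(1) psi[THEN conjunct2] pi] by auto
  have betaU: "cont1 T U \<beta>U" unfolding U_def \<beta>U_def using ext_cont1[OF tg sW W(2) Hc bi] .
  have "isB2 G T U (cup11 \<kappa>U \<psi>U)" unfolding isB2_def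
  proof (intro exI conjI ballI)
    show "cont1 T U \<beta>U" by fact
    fix x y assume x: "x \<in> U" and y: "y \<in> U"
    obtain h1 h2 v1 v2 w where d: "h1 \<in> H" "h2 \<in> H" "v1 \<in> W" "v2 \<in> W" "w \<in> W"
      "x = h1 \<otimes> v1" "y = h2 \<otimes> v2" "x \<otimes> y = (h1 \<otimes> h2) \<otimes> w"
      using decomp2[OF W(1) Hc x[unfolded U_def] y[unfolded U_def]] by blast
    have hh: "h1 \<otimes> h2 \<in> H" using subgroup.m_closed[OF H d(1,2)] .
    have e1: "\<kappa>U x = \<kappa> h1" unfolding \<kappa>U_def d(6) using ext_eq1[OF sW Hc ki d(1,3)] .
    have e2: "\<psi>U y = \<psi> h2" unfolding \<psi>U_def d(7) using ext_eq1[OF sW Hc pi d(2,4)] .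
    have e3: "\<beta>U y = \<beta> h2" unfolding \<beta>U_def d(7) using ext_eq1[OF sW Hc bi d(2,4)] .
    have e4: "\<beta>U x = \<beta> h1" unfolding \<beta>U_def d(6) using ext_eq1[OF sW Hc bi d(1,3)] .
    have e5: "\<beta>U (x \<otimes> y) = \<beta> (h1 \<otimes> h2)" unfolding \<beta>U_def d(8) using ext_eq1[OF sW Hc bi hh d(5)] .
    show "cup11 \<kappa>U \<psi>U (x, y) = \<beta>U y - \<beta>U (x \<otimes> y) + \<beta>U x"
      using beta(2)[OF d(1,2)] e1 e2 e3 e4 e5 unfolding cup11_def by simp
  qed
  then obtain \<phi> where phi: "cont1 T (kerS U \<kappa>U) \<phi>" "homF G (kerS U \<kappa>U) \<phi>"
    "\<And>g. g \<in> U \<Longrightarrow> \<psi>U g = cor1 (G\<lparr>carrier := U\<rparr>) (kerS U \<kappa>U) \<phi> g"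
    using C2U psiU unfolding C2_def by blast
  have NN: "kerS H \<kappa> \<subseteq> kerS U \<kappa>U" using L(3) L(6) unfolding kerS_def \<kappa>U_def by auto
  have "cont1 T (kerS H \<kappa>) \<phi>" using phi(1) NN by (rule cont1_mono)
  moreover have "homF G (kerS H \<kappa>) \<phi>" using phi(2) NN by (rule homF_sub)
  moreover have "\<forall>g\<in>H. \<psi> g = cor1 (G\<lparr>carrier := H\<rparr>) (kerS H \<kappa>) \<phi> g"
  proof
    fix g assume g: "g \<in> H"
    have gU: "g \<in> U" using g L(3) by auto
    have "\<psi> g = \<psi>U g" unfolding \<psi>U_def using ext_eq1'[OF sW Hc pi g] by simp
    also have "\<dots> = cor1 (G\<lparr>carrier := U\<rparr>) (kerS U \<kappa>U) \<phi> g" using phi(3)[OF gU] .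
    also have "\<dots> = cor1 (G\<lparr>carrier := H\<rparr>) (kerS H \<kappa>) \<phi> g"
    proof (rule cor_compat[OF H L(1) L(3) L(5) kh])
      show "\<And>h. h \<in> H \<Longrightarrow> \<kappa>U h = \<kappa> h" unfolding \<kappa>U_def using L(6) .
      show "\<forall>h\<in>H. \<kappa> h = 0 \<Longrightarrow> \<forall>u\<in>U. \<kappa>U u = 0" unfolding \<kappa>U_def using L(7) .
      show "homF G (kerS U \<kappa>U) \<phi>" by fact
      show "homF G (kerS H \<kappa>) \<phi>" using phi(2) NN by (rule homF_sub)
    qed (use g in auto)
    finally show "\<psi> g = cor1 (G\<lparr>carrier := H\<rparr>) (kerS H \<kappa>) \<phi> g" .
  qed
  ultimately show "\<exists>\<phi>. cont1 T (kerS H \<kappa>) \<phi> \<and> homF G (kerS H \<kappa>) \<phi> \<and>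
        (\<forall>g\<in>H. \<psi> g = cor1 (G\<lparr>carrier := H\<rparr>) (kerS H \<kappa>) \<phi> g)" by blast
qed

end

context group
begin

lemma C1_H:
  fixes \<kappa> :: "'a \<Rightarrow> 'p::prime_card mod_ring"
  assumes pg: "profinite_group G T" and H: "subgroup H G" and Hcl: "closedin T H"
    and kc: "cont1 T H \<kappa>" and kh: "homF G H \<kappa>"
    and hyp: "\<And>U \<kappa>'. subgroup U G \<Longrightarrow> openin T U \<Longrightarrow> cont1 T U \<kappa>' \<Longrightarrow> homF G U \<kappa>' \<Longrightarrow> C1 G T U (\<kappa>' :: 'a \<Rightarrow> 'p mod_ring)"
  shows "C1 G T H \<kappa>"
  unfolding C1_def
proof (intro allI impI)
  fix \<phi> :: "'a \<Rightarrow> 'p mod_ring"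
  assume phi: "cont1 T (kerS H \<kappa>) \<phi> \<and> homF G (kerS H \<kappa>) \<phi>"
  let ?N = "kerS H \<kappa>"
  have Hc: "H \<subseteq> carrier G" using H by (rule subgroup.subset)
  have sN: "subgroup ?N G" using H kh by (rule kerS_subgroup)
  have Nc: "?N \<subseteq> carrier G" using sN by (rule subgroup.subset)
  have Ncl: "closedin T ?N" using Hcl kc by (rule ker_closed)
  obtain V1 where V1: "subgroup V1 G" "openin T V1" "inv1 G H V1 \<kappa>"
    using unif1[OF pg Hcl kc[unfolded cont1_def]] unfolding inv1_def by blast
  obtain V2 where V2: "subgroup V2 G" "openin T V2" "inv1 G ?N V2 \<phi>"
    using unif1[OF pg Ncl phi[THEN conjunct1, unfolded cont1_def]] unfolding inv1_def by blast
  have V3: "subgroup (carrier G) G" "openin T (carrier G)"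
  proof -
    show "subgroup (carrier G) G" by (rule subgroup_self)
    have "topspace T = carrier G" using pg unfolding profinite_group_def topological_group_def by auto
    then show "openin T (carrier G)" by (metis openin_topspace)
  qed
  obtain W where W: "W \<lhd> G" "openin T W" "W \<subseteq> V1" "W \<subseteq> V2"
    using normal_below3[OF pg V1(1,2) V2(1,2) V3] by blast
  have sW: "subgroup W G" using W(1) by (rule normal_invE(1))
  have tg: "topological_group G T" using pg unfolding profinite_group_def by auto
  have ki: "inv1 G H W \<kappa>" using V1(3) W(3) by (rule inv1_mono)
  have pi: "inv1 G ?N W \<phi>" using V2(3) W(4) by (rule inv1_mono)
  define U where "U = H <#> W"
  define \<kappa>U where "\<kappa>U = (\<lambda>x. \<kappa> (rep G H W x))"
  define \<phi>U where "\<phi>U = (\<lambda>x. \<phi> (rep G ?N W x))"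
  note L = lift_all[OF pg H kh W(1,2) ki, folded U_def \<kappa>U_def]
  have NU: "kerS U \<kappa>U = ?N <#> W" using L(8) .
  have C1U: "C1 G T U \<kappa>U" using hyp[OF L(1,2,4,5)] .
  have phiU: "cont1 T (kerS U \<kappa>U) \<phi>U" "homF G (kerS U \<kappa>U) \<phi>U"
    unfolding NU \<phi>U_def
    using ext_cont1[OF tg sW W(2) Nc pi] ext_hom[OF sN W(1) phi[THEN conjunct2] pi] by auto
  have "isB2 G T U (cup11 \<kappa>U (cor1 (G\<lparr>carrier := U\<rparr>) (kerS U \<kappa>U) \<phi>U))"
    using C1U phiU unfolding C1_def by blast
  then have b: "isB2 G T H (cup11 \<kappa>U (cor1 (G\<lparr>carrier := U\<rparr>) (kerS U \<kappa>U) \<phi>U))"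
    using L(3) by (rule isB2_mono)
  show "isB2 G T H (cup11 \<kappa> (cor1 (G\<lparr>carrier := H\<rparr>) ?N \<phi>))"
  proof (rule isB2_cong[OF b])
    fix g h assume g: "g \<in> H" and h: "h \<in> H"
    have NN: "?N \<subseteq> kerS U \<kappa>U" using L(3) L(6) unfolding kerS_def \<kappa>U_def by auto
    have "cor1 (G\<lparr>carrier := U\<rparr>) (kerS U \<kappa>U) \<phi>U h = cor1 (G\<lparr>carrier := H\<rparr>) ?N \<phi> h"
    proof (rule cor_compat[OF H L(1) L(3) L(5) kh])
      show "\<And>h. h \<in> H \<Longrightarrow> \<kappa>U h = \<kappa> h" unfolding \<kappa>U_def using L(6) .
      show "\<forall>h\<in>H. \<kappa> h = 0 \<Longrightarrow> \<forall>u\<in>U. \<kappa>U u = 0" unfolding \<kappa>U_def using L(7) .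
      show "homF G (kerS U \<kappa>U) \<phi>U" by fact
      show "homF G ?N \<phi>" using phi by simp
      show "\<And>n. n \<in> ?N \<Longrightarrow> \<phi>U n = \<phi> n" unfolding \<phi>U_def using ext_eq1'[OF sW Nc pi] .
    qed (use h in auto)
    moreover have "\<kappa>U g = \<kappa> g" unfolding \<kappa>U_def using L(6)[OF g] .
    ultimately show "cup11 \<kappa>U (cor1 (G\<lparr>carrier := U\<rparr>) (kerS U \<kappa>U) \<phi>U) (g, h) =
                     cup11 \<kappa> (cor1 (G\<lparr>carrier := H\<rparr>) ?N \<phi>) (g, h)"
      unfolding cup11_def by simp
  qed
qed

end

context group
begin

lemma C4_H:
  fixes \<kappa> :: "'a \<Rightarrow> 'p::prime_card mod_ring"
  assumes pg: "profinite_group G T" and H: "subgroup H G" and Hcl: "closedin T H"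
    and kc: "cont1 T H \<kappa>" and kh: "homF G H \<kappa>"
    and hyp: "\<And>U \<kappa>'. subgroup U G \<Longrightarrow> openin T U \<Longrightarrow> cont1 T U \<kappa>' \<Longrightarrow> homF G U \<kappa>' \<Longrightarrow> C4 G T U (\<kappa>' :: 'a \<Rightarrow> 'p mod_ring)"
  shows "C4 G T H \<kappa>"
  unfolding C4_def
proof (intro allI impI)
  fix f :: "'a \<times> 'a \<Rightarrow> 'p mod_ring"
  assume fz: "cont2 T H f \<and> cocyc G H f" and fb: "isB2 G T (kerS H \<kappa>) f"
  let ?N = "kerS H \<kappa>"
  obtain \<theta> where theta: "cont1 T ?N \<theta>" "\<And>g h. g \<in> ?N \<Longrightarrow> h \<in> ?N \<Longrightarrow> f (g, h) = \<theta> h - \<theta> (g \<otimes> h) + \<theta> g"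
    using fb unfolding isB2_def by blast
  have Hc: "H \<subseteq> carrier G" using H by (rule subgroup.subset)
  have sN: "subgroup ?N G" using H kh by (rule kerS_subgroup)
  have Nc: "?N \<subseteq> carrier G" using sN by (rule subgroup.subset)
  have NH: "?N \<subseteq> H" unfolding kerS_def by auto
  have Ncl: "closedin T ?N" using Hcl kc by (rule ker_closed)
  obtain V1 where V1: "subgroup V1 G" "openin T V1" "inv1 G H V1 \<kappa>"
    using unif1[OF pg Hcl kc[unfolded cont1_def]] unfolding inv1_def by blast
  obtain V2 where V2: "subgroup V2 G" "openin T V2" "inv2 G H V2 f"
    using unif2[OF pg Hcl fz[THEN conjunct1, unfolded cont2_def]] unfolding inv2_def by blast
  obtain V3 where V3: "subgroup V3 G" "openin T V3" "inv1 G ?N V3 \<theta>"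
    using unif1[OF pg Ncl theta(1)[unfolded cont1_def]] unfolding inv1_def by blast
  obtain W where W: "W \<lhd> G" "openin T W" "W \<subseteq> V1" "W \<subseteq> V2" "W \<subseteq> V3"
    using normal_below3[OF pg V1(1,2) V2(1,2) V3(1,2)] by blast
  have sW: "subgroup W G" using W(1) by (rule normal_invE(1))
  have tg: "topological_group G T" using pg unfolding profinite_group_def by auto
  have ki: "inv1 G H W \<kappa>" using V1(3) W(3) by (rule inv1_mono)
  have fi: "inv2 G H W f" using V2(3) W(4) by (rule inv2_mono)
  have ti: "inv1 G ?N W \<theta>" using V3(3) W(5) by (rule inv1_mono)
  define U where "U = H <#> W"
  define \<kappa>U where "\<kappa>U = (\<lambda>x. \<kappa> (rep G H W x))"
  define fU where "fU = (\<lambda>(x,y). f (rep G H W x, rep G H W y))"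
  define \<theta>U where "\<theta>U = (\<lambda>x. \<theta> (rep G ?N W x))"
  note L = lift_all[OF pg H kh W(1,2) ki, folded U_def \<kappa>U_def]
  have NU: "kerS U \<kappa>U = ?N <#> W" using L(8) .
  have C4U: "C4 G T U \<kappa>U" using hyp[OF L(1,2,4,5)] .
  have fU_eq: "fU (h1 \<otimes> v1, h2 \<otimes> v2) = f (h1, h2)" if "h1 \<in> H" "h2 \<in> H" "v1 \<in> W" "v2 \<in> W" for h1 h2 v1 v2
    unfolding fU_def using ext_eq2[OF sW Hc fi that] by simp
  have cU: "cont2 T U fU" unfolding U_def fU_def using ext_cont2[OF tg sW W(2) Hc fi] .
  have zU: "cocyc G U fU" unfolding cocyc_def
  proof (intro ballI)
    fix x y z assume x: "x \<in> U" and y: "y \<in> U" and z: "z \<in> U"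
    obtain h1 h2 v1 v2 w where d: "h1 \<in> H" "h2 \<in> H" "v1 \<in> W" "v2 \<in> W" "w \<in> W"
      "x = h1 \<otimes> v1" "y = h2 \<otimes> v2" "x \<otimes> y = (h1 \<otimes> h2) \<otimes> w"
      using decomp2[OF W(1) Hc x[unfolded U_def] y[unfolded U_def]] by blast
    obtain h2' h3 v2' v3 w' where d': "h2' \<in> H" "h3 \<in> H" "v2' \<in> W" "v3 \<in> W" "w' \<in> W"
      "y = h2' \<otimes> v2'" "z = h3 \<otimes> v3" "y \<otimes> z = (h2' \<otimes> h3) \<otimes> w'"
      using decomp2[OF W(1) Hc y[unfolded U_def] z[unfolded U_def]] by blast
    have hh: "h1 \<otimes> h2 \<in> H" using subgroup.m_closed[OF H d(1,2)] .
    have hh': "h2' \<otimes> h3 \<in> H" using subgroup.m_closed[OF H d'(1,2)] .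
    have e1: "fU (y, z) = f (h2', h3)" using fU_eq[OF d'(1,2,3,4)] d'(6,7) by simp
    have e2: "fU (x \<otimes> y, z) = f (h1 \<otimes> h2, h3)" using fU_eq[OF hh d'(2) d(5) d'(4)] d(8) d'(7) by simp
    have e3: "fU (x, y \<otimes> z) = f (h1, h2' \<otimes> h3)" using fU_eq[OF d(1) hh' d(3) d'(5)] d(6) d'(8) by simp
    have e4: "fU (x, y) = f (h1, h2)" using fU_eq[OF d(1,2,3,4)] d(6,7) by simp
    have e5: "f (h1, h2') = f (h1, h2)"
    proof -
      have "fU (x, y) = f (h1, h2')" using fU_eq[OF d(1) d'(1) d(3) d'(3)] d(6) d'(6) by simp
      then show ?thesis using e4 by simp
    qed
    have yy: "f (h2', h3) = f (h2, h3)"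
    proof -
      have "fU (y, z) = f (h2, h3)" using fU_eq[OF d(2) d'(2) d(4) d'(4)] d(7) d'(7) by simp
      then show ?thesis using e1 by simp
    qed
    have yy2: "f (h1 \<otimes> h2, h3) = f (h1 \<otimes> h2, h3)" ..
    have yy3: "f (h1, h2' \<otimes> h3) = f (h1, h2 \<otimes> h3)"
    proof -
      obtain u where u: "u \<in> W" "y \<otimes> z = (h2 \<otimes> h3) \<otimes> u"
        using prod_decomp[OF W(1) Hc d(2) d'(2) d(4) d'(4)] d(7) d'(7) by auto
      have hh2: "h2 \<otimes> h3 \<in> H" using subgroup.m_closed[OF H d(2) d'(2)] .
      have "fU (x, y \<otimes> z) = f (h1, h2 \<otimes> h3)" using fU_eq[OF d(1) hh2 d(3) u(1)] d(6) u(2) by simp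
      then show ?thesis using e3 by simp
    qed
    have "f (h2, h3) - f (h1 \<otimes> h2, h3) + f (h1, h2 \<otimes> h3) - f (h1, h2) = 0"
      using fz d(1,2) d'(2) unfolding cocyc_def by blast
    then show "fU (y, z) - fU (x \<otimes> y, z) + fU (x, y \<otimes> z) - fU (x, y) = 0"
      using e1 e2 e3 e4 yy yy3 by simp
  qed
  have bU: "isB2 G T (kerS U \<kappa>U) fU" unfolding isB2_def NU
  proof (intro exI conjI ballI)
    show "cont1 T (?N <#> W) \<theta>U" unfolding \<theta>U_def using ext_cont1[OF tg sW W(2) Nc ti] .
    fix x y assume x: "x \<in> ?N <#> W" and y: "y \<in> ?N <#> W"
    obtain n1 n2 v1 v2 w where d: "n1 \<in> ?N" "n2 \<in> ?N" "v1 \<in> W" "v2 \<in> W" "w \<in> W"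
      "x = n1 \<otimes> v1" "y = n2 \<otimes> v2" "x \<otimes> y = (n1 \<otimes> n2) \<otimes> w"
      using decomp2[OF W(1) Nc x y] by blast
    have nn: "n1 \<otimes> n2 \<in> ?N" using subgroup.m_closed[OF sN d(1,2)] .
    have nH: "n1 \<in> H" "n2 \<in> H" using d(1,2) NH by auto
    have e0: "fU (x, y) = f (n1, n2)" using fU_eq[OF nH d(3,4)] d(6,7) by simp
    have e1: "\<theta>U y = \<theta> n2" unfolding \<theta>U_def d(7) using ext_eq1[OF sW Nc ti d(2,4)] .
    have e2: "\<theta>U x = \<theta> n1" unfolding \<theta>U_def d(6) using ext_eq1[OF sW Nc ti d(1,3)] .
    have e3: "\<theta>U (x \<otimes> y) = \<theta> (n1 \<otimes> n2)" unfolding \<theta>U_def d(8) using ext_eq1[OF sW Nc ti nn d(5)] .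
    show "fU (x, y) = \<theta>U y - \<theta>U (x \<otimes> y) + \<theta>U x" using theta(2)[OF d(1,2)] e0 e1 e2 e3 by simp
  qed
  obtain \<psi> where psi: "cont1 T U \<psi>" "homF G U \<psi>" "isB2 G T U (\<lambda>x. fU x - cup11 \<kappa>U \<psi> x)"
    using C4U cU zU bU unfolding C4_def by blast
  have "cont1 T H \<psi>" using psi(1) L(3) by (rule cont1_mono)
  moreover have "homF G H \<psi>" using psi(2) L(3) by (rule homF_sub)
  moreover have "isB2 G T H (\<lambda>x. f x - cup11 \<kappa> \<psi> x)"
  proof (rule isB2_cong[OF isB2_mono[OF psi(3) L(3)]])
    fix g h assume g: "g \<in> H" and h: "h \<in> H"
    have "fU (g, h) = f (g, h)" unfolding fU_def using ext_eq2'[OF sW Hc fi g h] by simp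
    moreover have "\<kappa>U g = \<kappa> g" unfolding \<kappa>U_def using L(6)[OF g] .
    ultimately show "fU (g, h) - cup11 \<kappa>U \<psi> (g, h) = f (g, h) - cup11 \<kappa> \<psi> (g, h)"
      unfolding cup11_def by simp
  qed
  ultimately show "\<exists>\<psi>. cont1 T H \<psi> \<and> homF G H \<psi> \<and> isB2 G T H (\<lambda>x. f x - cup11 \<kappa> \<psi> x)" by blast
qed

end

theorem mainTheorem11:
  fixes \<Gamma> :: "('a,'b) monoid_scheme" and T :: "'a topology"
  assumes "profinite_group \<Gamma> T"
    and "\<forall>U. subgroup U \<Gamma> \<and> openin T U \<longrightarrow>
           cup_exact (subgrp \<Gamma> U) (subtopology T U) TYPE('p::prime_card)"
  shows "\<forall>H. subgroup H \<Gamma> \<and> closedin T H \<longrightarrow>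
           cup_exact (subgrp \<Gamma> H) (subtopology T H) TYPE('p::prime_card)"
proof (intro allI impI)
  fix H assume H: "subgroup H \<Gamma> \<and> closedin T H"
  have pg: "profinite_group \<Gamma> T" by fact
  interpret group \<Gamma> using pg unfolding profinite_group_def topological_group_def by auto
  have hyp: "cont1 T U \<kappa> \<Longrightarrow> homF \<Gamma> U \<kappa> \<Longrightarrow>
      C1 \<Gamma> T U \<kappa> \<and> C2 \<Gamma> T U \<kappa> \<and> C3 \<Gamma> T U \<kappa> \<and> C4 \<Gamma> T U \<kappa>"
    if "subgroup U \<Gamma>" "openin T U" for U and \<kappa> :: "'a \<Rightarrow> 'p mod_ring"
  proof -
    have "cup_exact (subgrp \<Gamma> U) (subtopology T U) TYPE('p)" using assms(2) that by blast
    then show "cont1 T U \<kappa> \<Longrightarrow> homF \<Gamma> U \<kappa> \<Longrightarrow>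
      C1 \<Gamma> T U \<kappa> \<and> C2 \<Gamma> T U \<kappa> \<and> C3 \<Gamma> T U \<kappa> \<and> C4 \<Gamma> T U \<kappa>"
      unfolding cup_exact_iff by blast
  qed
  show "cup_exact (subgrp \<Gamma> H) (subtopology T H) TYPE('p)"
    unfolding cup_exact_iff
  proof (intro allI impI conjI)
    fix \<kappa> :: "'a \<Rightarrow> 'p mod_ring"
    assume k: "cont1 T H \<kappa> \<and> homF \<Gamma> H \<kappa>"
    show "C1 \<Gamma> T H \<kappa>" using pg H[THEN conjunct1] H[THEN conjunct2] k[THEN conjunct1] k[THEN conjunct2]
      by (rule C1_H) (use hyp in blast)
    show "C2 \<Gamma> T H \<kappa>" using pg H[THEN conjunct1] H[THEN conjunct2] k[THEN conjunct1] k[THEN conjunct2]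
      by (rule C2_H) (use hyp in blast)
    show "C3 \<Gamma> T H \<kappa>" by (rule C3_all)
    show "C4 \<Gamma> T H \<kappa>" using pg H[THEN conjunct1] H[THEN conjunct2] k[THEN conjunct1] k[THEN conjunct2]
      by (rule C4_H) (use hyp in blast)
  qed
qed

end
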